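(* Let $(M,d)$ be a pointed metric space. The space $\mathrm{Lip}_0(M)$ has the SD2P if and only if for every $n\in\mathbb N$, all optimal $\mu_1,\dots,\mu_n\in ba(\widetilde M)$ with $\|\mu_i\|=1$, and every $\gamma\in(0,1)$, there exist subsets $A_1,\dots,A_n\subseteq\widetilde M$ with $\mu_i(A_i)\ge\gamma$ for all $i$, functions $f_1,g_1,\dots,f_n,g_n\in B_{\mathrm{Lip}_0(M)}$, and $u,v\in M$ with $u\ne v$ such that for all $i\in\{1,\dots,n\}$ and $(x,y)\in A_i$, $f_i(m_{x,y})\ge\gamma$ and $g_i(m_{x,y})\ge\gamma$, and for all $i\in\{1,\dots,n\}$ and $x,y\in\pi(A_i)$, \[\max\{f_i(x)-f_i(y),\,g_i(y)-g_i(x)\}+\gamma d(u,v)\le d(x,u)+d(y,v).\]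
   Context: $M$ has base point $0$; $\mathrm{Lip}_0(M)$ is the real Banach space of Lipschitz $f\colon M\to\mathbb R$ with $f(0)=0$, normed by the best Lipschitz constant, with unit ball $B_{\mathrm{Lip}_0(M)}$. A Banach space $X$ has the SD2P if for all $n\in\mathbb N$, $\lambda_1,\dots,\lambda_n\ge0$ with $\sum\lambda_i=1$ and slices $S_1,\dots,S_n$ of $B_X$ (sets $\{x\in B_X:x^*(x)>1-\alpha\}$ with $\|x^*\|=1$, $\alpha>0$), $\sum_i\lambda_iS_i$ has diameter $2$. $\widetilde M=\{(x,y)\in M\times M:x\ne y\}$, $f(m_{x,y})=(f(x)-f(y))/d(x,y)$, $\pi(A)=\{x\in M:\exists y,\ (x,y)\in A\text{ or }(y,x)\in A\}$. $ba(\widetilde M)$ is the Banach space of bounded finitely additive signed measures on the power set of $\widetilde M$ with norm $|\mu|(\widetilde M)$. $\Phi f(x,y)=(f(x)-f(y))/d(x,y)$ and $(\Phi^*\mu)(f)=\int_{\widetilde M}\Phi f\,d\mu$. $\mu$ is optimal if positive and $\|\Phi^*\mu\|=\|\mu\|$. *)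

theory Defs
  imports "HOL-Analysis.Analysis"
begin

text \<open>Elements of Lip_0(M) are represented as functions 'a => real that vanish at z and
  outside M (so representatives are unique) and are Lipschitz on M.\<close>

definition lip0 :: "'a set \<Rightarrow> ('a \<Rightarrow> 'a \<Rightarrow> real) \<Rightarrow> 'a \<Rightarrow> ('a \<Rightarrow> real) set" where
  "lip0 M d z = {f. f z = 0 \<and> (\<forall>x. x \<notin> M \<longrightarrow> f x = 0) \<and>
                   (\<exists>L. \<forall>x\<in>M. \<forall>y\<in>M. \<bar>f x - f y\<bar> \<le> L * d x y)}"

text \<open>Best Lipschitz constant (0 if M has fewer than two points).\<close>
definition lipnorm :: "'a set \<Rightarrow> ('a \<Rightarrow> 'a \<Rightarrow> real) \<Rightarrow> ('a \<Rightarrow> real) \<Rightarrow> real" where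
  "lipnorm M d f = Sup ({\<bar>f x - f y\<bar> / d x y | x y. x \<in> M \<and> y \<in> M \<and> x \<noteq> y} \<union> {0})"

definition lip0_ball :: "'a set \<Rightarrow> ('a \<Rightarrow> 'a \<Rightarrow> real) \<Rightarrow> 'a \<Rightarrow> ('a \<Rightarrow> real) set" where
  "lip0_ball M d z = {f \<in> lip0 M d z. lipnorm M d f \<le> 1}"

text \<open>Elements of the dual space Lip_0(M)^*: linear bounded functionals on lip0
  (values outside lip0 are irrelevant).\<close>
definition lip0_dual :: "'a set \<Rightarrow> ('a \<Rightarrow> 'a \<Rightarrow> real) \<Rightarrow> 'a \<Rightarrow> (('a \<Rightarrow> real) \<Rightarrow> real) \<Rightarrow> bool" where
  "lip0_dual M d z \<phi> \<longleftrightarrow>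
     (\<forall>f\<in>lip0 M d z. \<forall>g\<in>lip0 M d z. \<forall>a b::real.
        \<phi> (\<lambda>x. a * f x + b * g x) = a * \<phi> f + b * \<phi> g) \<and>
     (\<exists>C. \<forall>f\<in>lip0 M d z. \<bar>\<phi> f\<bar> \<le> C * lipnorm M d f)"

definition dual_norm :: "'a set \<Rightarrow> ('a \<Rightarrow> 'a \<Rightarrow> real) \<Rightarrow> 'a \<Rightarrow> (('a \<Rightarrow> real) \<Rightarrow> real) \<Rightarrow> real" where
  "dual_norm M d z \<phi> = Sup ((\<lambda>f. \<bar>\<phi> f\<bar>) ` lip0_ball M d z)"

definition slice :: "'a set \<Rightarrow> ('a \<Rightarrow> 'a \<Rightarrow> real) \<Rightarrow> 'a \<Rightarrow> (('a \<Rightarrow> real) \<Rightarrow> real) \<Rightarrow> real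
                     \<Rightarrow> ('a \<Rightarrow> real) set" where
  "slice M d z \<phi> \<alpha> = {f \<in> lip0_ball M d z. \<phi> f > 1 - \<alpha>}"

definition lip_diam :: "'a set \<Rightarrow> ('a \<Rightarrow> 'a \<Rightarrow> real) \<Rightarrow> ('a \<Rightarrow> real) set \<Rightarrow> real" where
  "lip_diam M d S = Sup {lipnorm M d (\<lambda>x. f x - g x) | f g. f \<in> S \<and> g \<in> S}"

definition convex_comb_sets :: "nat \<Rightarrow> (nat \<Rightarrow> real) \<Rightarrow> (nat \<Rightarrow> ('a \<Rightarrow> real) set) \<Rightarrow> ('a \<Rightarrow> real) set" where
  "convex_comb_sets n lam S = {(\<lambda>x. \<Sum>i<n. lam i * f i x) | f. \<forall>i<n. f i \<in> S i}"

definition SD2P_lip0 :: "'a set \<Rightarrow> ('a \<Rightarrow> 'a \<Rightarrow> real) \<Rightarrow> 'a \<Rightarrow> bool" where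
  "SD2P_lip0 M d z \<longleftrightarrow>
     (\<forall>n lam \<phi> \<alpha>. (\<forall>i<n. lam i \<ge> 0) \<and> (\<Sum>i<n. lam i) = 1 \<and>
        (\<forall>i<n. lip0_dual M d z (\<phi> i) \<and> dual_norm M d z (\<phi> i) = 1 \<and> \<alpha> i > 0) \<longrightarrow>
        lip_diam M d (convex_comb_sets n lam (\<lambda>i. slice M d z (\<phi> i) (\<alpha> i))) = 2)"

definition Mtilde :: "'a set \<Rightarrow> ('a \<times> 'a) set" where
  "Mtilde M = {(x, y). x \<in> M \<and> y \<in> M \<and> x \<noteq> y}"

definition molecule_val :: "('a \<Rightarrow> 'a \<Rightarrow> real) \<Rightarrow> ('a \<Rightarrow> real) \<Rightarrow> 'a \<times> 'a \<Rightarrow> real" where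
  "molecule_val d f p = (f (fst p) - f (snd p)) / d (fst p) (snd p)"

definition pi_set :: "('a \<times> 'a) set \<Rightarrow> 'a set" where
  "pi_set A = {x. \<exists>y. (x, y) \<in> A \<or> (y, x) \<in> A}"

definition is_ba :: "('b set) \<Rightarrow> ('b set \<Rightarrow> real) \<Rightarrow> bool" where
  "is_ba T \<mu> \<longleftrightarrow>
     (\<forall>A B. A \<subseteq> T \<and> B \<subseteq> T \<and> A \<inter> B = {} \<longrightarrow> \<mu> (A \<union> B) = \<mu> A + \<mu> B) \<and>
     (\<exists>C. \<forall>A. A \<subseteq> T \<longrightarrow> \<bar>\<mu> A\<bar> \<le> C)"

definition ba_norm :: "('b set) \<Rightarrow> ('b set \<Rightarrow> real) \<Rightarrow> real" where
  "ba_norm T \<mu> = Sup {(\<Sum>B\<in>P. \<bar>\<mu> B\<bar>) | P. finite P \<and> \<Union>P = T \<and>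
                        (\<forall>B\<in>P. \<forall>C\<in>P. B \<noteq> C \<longrightarrow> B \<inter> C = {})}"

definition positive_ba :: "('b set) \<Rightarrow> ('b set \<Rightarrow> real) \<Rightarrow> bool" where
  "positive_ba T \<mu> \<longleftrightarrow> (\<forall>A. A \<subseteq> T \<longrightarrow> \<mu> A \<ge> 0)"

text \<open>Integral of a bounded function h over T w.r.t. a finitely additive measure mu:
  limit of integrals of the simple functions floor(k h)/k (uniform approximations of h).\<close>
definition fa_integral :: "('b set) \<Rightarrow> ('b set \<Rightarrow> real) \<Rightarrow> ('b \<Rightarrow> real) \<Rightarrow> real" where
  "fa_integral T \<mu> h = lim (\<lambda>k.
     \<Sum>j\<in>{\<lfloor>real (Suc k) * h p\<rfloor> | p. p \<in> T}.
        (real_of_int j / real (Suc k)) * \<mu> {p \<in> T. \<lfloor>real (Suc k) * h p\<rfloor> = j})"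

definition Phi_star :: "'a set \<Rightarrow> ('a \<Rightarrow> 'a \<Rightarrow> real) \<Rightarrow> (('a \<times> 'a) set \<Rightarrow> real) \<Rightarrow> ('a \<Rightarrow> real) \<Rightarrow> real" where
  "Phi_star M d \<mu> f = fa_integral (Mtilde M) \<mu> (molecule_val d f)"

definition optimal :: "'a set \<Rightarrow> ('a \<Rightarrow> 'a \<Rightarrow> real) \<Rightarrow> 'a \<Rightarrow> (('a \<times> 'a) set \<Rightarrow> real) \<Rightarrow> bool" where
  "optimal M d z \<mu> \<longleftrightarrow> is_ba (Mtilde M) \<mu> \<and> positive_ba (Mtilde M) \<mu> \<and>
     dual_norm M d z (Phi_star M d \<mu>) = ba_norm (Mtilde M) \<mu>"

end

theory Submission
  imports Defs
begin

definition ind :: "'b set \<Rightarrow> 'b \<Rightarrow> real" where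
  "ind A = (\<lambda>q. if q \<in> A then 1 else 0)"

definition fint :: "'b set \<Rightarrow> ('b set \<Rightarrow> real) \<Rightarrow> ('b \<Rightarrow> real) \<Rightarrow> real" where
  "fint T \<mu> s = (\<Sum>c\<in>s ` T. c * \<mu> {p\<in>T. s p = c})"

definition bdd_on :: "'b set \<Rightarrow> ('b \<Rightarrow> real) \<Rightarrow> bool" where
  "bdd_on T h \<longleftrightarrow> (\<exists>C. \<forall>p\<in>T. \<bar>h p\<bar> \<le> C)"

definition skf :: "nat \<Rightarrow> ('b \<Rightarrow> real) \<Rightarrow> 'b \<Rightarrow> real" where
  "skf k h = (\<lambda>p. real_of_int \<lfloor>real (Suc k) * h p\<rfloor> / real (Suc k))"

lemma skf_le: "skf k h p \<le> h p"
proof -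
  have "real_of_int \<lfloor>real (Suc k) * h p\<rfloor> \<le> real (Suc k) * h p" by (rule of_int_floor_le)
  then show ?thesis unfolding skf_def by (simp add: divide_le_eq mult.commute)
qed

lemma skf_gt: "h p < skf k h p + 1 / real (Suc k)"
proof -
  have "real (Suc k) * h p < real_of_int \<lfloor>real (Suc k) * h p\<rfloor> + 1" by (rule real_of_int_floor_add_one_gt)
  then have "h p < (real_of_int \<lfloor>real (Suc k) * h p\<rfloor> + 1) / real (Suc k)"
    by (simp add: less_divide_eq mult.commute)
  then show ?thesis unfolding skf_def by (simp add: add_divide_distrib)
qed

lemma small_le:
  fixes x y c :: real
  assumes "\<And>k. x \<le> y + c / real (Suc k)"
  shows "x \<le> y"
proof (rule ccontr)
  assume "\<not> x \<le> y"
  then have pos: "0 < x - y" by simp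
  have c0: "c > 0"
  proof (rule ccontr)
    assume "\<not> c > 0"
    then have "c / real (Suc 0) \<le> 0" by simp
    with assms[of 0] pos show False by simp
  qed
  obtain k where k: "inverse (real (Suc k)) < (x - y) / c"
    using reals_Archimedean[of "(x - y) / c"] pos c0 by auto
  then have "c * inverse (real (Suc k)) < x - y" using c0 by (simp add: field_simps)
  with assms[of k] show False by (simp add: field_simps)
qed

lemma small0:
  fixes x c :: real
  assumes "\<And>k. \<bar>x\<bar> \<le> c / real (Suc k)"
  shows "x = 0"
proof -
  have "\<bar>x\<bar> \<le> 0" using small_le[of "\<bar>x\<bar>" 0 c] assms by simp
  then show ?thesis by simp
qed

locale pba =
  fixes T :: "'b set" and \<mu> :: "'b set \<Rightarrow> real"
  assumes ba: "is_ba T \<mu>" and pos: "positive_ba T \<mu>"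
begin

lemma add: "A \<subseteq> T \<Longrightarrow> B \<subseteq> T \<Longrightarrow> A \<inter> B = {} \<Longrightarrow> \<mu> (A \<union> B) = \<mu> A + \<mu> B"
  using ba unfolding is_ba_def by blast

lemma empty0: "\<mu> {} = 0"
  using add[of "{}" "{}"] by simp

lemma nonneg: "A \<subseteq> T \<Longrightarrow> \<mu> A \<ge> 0"
  using pos unfolding positive_ba_def by blast

lemma mono: "A \<subseteq> B \<Longrightarrow> B \<subseteq> T \<Longrightarrow> \<mu> A \<le> \<mu> B"
proof -
  assume "A \<subseteq> B" "B \<subseteq> T"
  then have "\<mu> (A \<union> (B - A)) = \<mu> A + \<mu> (B - A)" by (intro add) auto
  moreover have "A \<union> (B - A) = B" using \<open>A \<subseteq> B\<close> by blast
  ultimately have "\<mu> B = \<mu> A + \<mu> (B - A)" by simp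
  moreover have "\<mu> (B - A) \<ge> 0" using nonneg \<open>B \<subseteq> T\<close> by blast
  ultimately show ?thesis by simp
qed

lemma diff: "A \<subseteq> T \<Longrightarrow> \<mu> (T - A) = \<mu> T - \<mu> A"
  using add[of A "T - A"] by (simp add: Un_absorb1 Diff_partition)

lemma subadd: "A \<subseteq> T \<Longrightarrow> B \<subseteq> T \<Longrightarrow> \<mu> (A \<union> B) \<le> \<mu> A + \<mu> B"
proof -
  assume a: "A \<subseteq> T" "B \<subseteq> T"
  have "A \<union> B = A \<union> (B - A)" by blast
  then have "\<mu> (A \<union> B) = \<mu> A + \<mu> (B - A)" using add[of A "B - A"] a by auto
  moreover have "\<mu> (B - A) \<le> \<mu> B" using mono[of "B - A" B] a by auto
  ultimately show ?thesis by simp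
qed

lemma fadd_UN:
  assumes "finite F" "\<forall>j\<in>F. B j \<subseteq> T" "\<forall>i\<in>F. \<forall>j\<in>F. i \<noteq> j \<longrightarrow> B i \<inter> B j = {}"
  shows "\<mu> (\<Union>j\<in>F. B j) = (\<Sum>j\<in>F. \<mu> (B j))"
  using assms
proof (induction F rule: finite_induct)
  case empty
  then show ?case by (simp add: empty0)
next
  case (insert x F)
  have "\<mu> (\<Union>j\<in>insert x F. B j) = \<mu> (B x \<union> (\<Union>j\<in>F. B j))" by simp
  also have "\<dots> = \<mu> (B x) + \<mu> (\<Union>j\<in>F. B j)"
    apply (rule add) using insert by auto
  also have "\<dots> = \<mu> (B x) + (\<Sum>j\<in>F. \<mu> (B j))" using insert by simp
  finally show ?case using insert by simp
qed

lemma fint_key: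
  assumes fin: "finite (key ` T)"
  shows "fint T \<mu> (\<lambda>p. w (key p)) = (\<Sum>j\<in>key ` T. w j * \<mu> {p\<in>T. key p = j})"
proof -
  let ?S = "key ` T"
  let ?C = "(\<lambda>p. w (key p)) ` T"
  have finC: "finite ?C" using finite_imageI[OF fin, of w] by (simp add: image_image)
  have eq: "\<mu> {p\<in>T. w (key p) = c} = (\<Sum>j\<in>{j\<in>?S. w j = c}. \<mu> {p\<in>T. key p = j})" for c
  proof -
    have "{p\<in>T. w (key p) = c} = (\<Union>j\<in>{j\<in>?S. w j = c}. {p\<in>T. key p = j})" by auto
    then show ?thesis using fadd_UN[of "{j\<in>?S. w j = c}" "\<lambda>j. {p\<in>T. key p = j}"] fin by auto
  qed
  have "fint T \<mu> (\<lambda>p. w (key p)) = (\<Sum>c\<in>?C. c * (\<Sum>j\<in>{j\<in>?S. w j = c}. \<mu> {p\<in>T. key p = j}))"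
    unfolding fint_def using eq by simp
  also have "\<dots> = (\<Sum>c\<in>?C. (\<Sum>j\<in>{j\<in>?S. w j = c}. w j * \<mu> {p\<in>T. key p = j}))"
    by (simp add: sum_distrib_left)
  also have "\<dots> = (\<Sum>j\<in>?S. w j * \<mu> {p\<in>T. key p = j})"
    using sum.group[of ?S ?C w "\<lambda>j. w j * \<mu> {p\<in>T. key p = j}"] fin finC by auto
  finally show ?thesis .
qed

lemma fint_superset:
  assumes "finite F" "s ` T \<subseteq> F"
  shows "fint T \<mu> s = (\<Sum>c\<in>F. c * \<mu> {p\<in>T. s p = c})"
  unfolding fint_def
proof (rule sum.mono_neutral_left[OF assms(1) assms(2)])
  show "\<forall>i\<in>F - s ` T. i * \<mu> {p \<in> T. s p = i} = 0"
  proof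
    fix i assume "i \<in> F - s ` T"
    then have "{p \<in> T. s p = i} = {}" by auto
    then show "i * \<mu> {p \<in> T. s p = i} = 0" by (simp only: empty0 mult_zero_right)
  qed
qed

lemma fint_add:
  assumes "finite (s ` T)" "finite (t ` T)"
  shows "fint T \<mu> (\<lambda>p. s p + t p) = fint T \<mu> s + fint T \<mu> t"
proof -
  define key where "key = (\<lambda>p. (s p, t p))"
  have fk: "finite (key ` T)"
    by (rule finite_subset[of _ "s ` T \<times> t ` T"]) (auto simp: key_def assms)
  have "fint T \<mu> (\<lambda>p. s p + t p) = fint T \<mu> (\<lambda>p. (\<lambda>j. fst j + snd j) (key p))"
    by (simp add: key_def)
  also have "\<dots> = (\<Sum>j\<in>key ` T. (fst j + snd j) * \<mu> {p\<in>T. key p = j})"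
    by (rule fint_key[OF fk])
  also have "\<dots> = (\<Sum>j\<in>key ` T. fst j * \<mu> {p\<in>T. key p = j}) + (\<Sum>j\<in>key ` T. snd j * \<mu> {p\<in>T. key p = j})"
    by (simp add: distrib_right sum.distrib)
  also have "(\<Sum>j\<in>key ` T. fst j * \<mu> {p\<in>T. key p = j}) = fint T \<mu> (\<lambda>p. fst (key p))"
    by (rule fint_key[OF fk, symmetric])
  also have "(\<Sum>j\<in>key ` T. snd j * \<mu> {p\<in>T. key p = j}) = fint T \<mu> (\<lambda>p. snd (key p))"
    by (rule fint_key[OF fk, symmetric])
  finally show ?thesis by (simp add: key_def)
qed

lemma fint_scale:
  assumes "finite (s ` T)"
  shows "fint T \<mu> (\<lambda>p. c * s p) = c * fint T \<mu> s"
proof -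
  have "fint T \<mu> (\<lambda>p. c * s p) = (\<Sum>j\<in>s ` T. (c * j) * \<mu> {p\<in>T. s p = j})"
    using fint_key[OF assms, of "\<lambda>j. c * j"] by simp
  also have "\<dots> = c * fint T \<mu> s" unfolding fint_def by (simp add: sum_distrib_left mult.assoc)
  finally show ?thesis .
qed

lemma fint_nonneg:
  assumes "\<forall>p\<in>T. s p \<ge> 0"
  shows "fint T \<mu> s \<ge> 0"
  unfolding fint_def
  by (rule sum_nonneg) (use assms nonneg in auto)

lemma fint_const: "fint T \<mu> (\<lambda>p. c) = c * \<mu> T"
proof -
  have "fint T \<mu> (\<lambda>p. c) = (\<Sum>x\<in>{c}. x * \<mu> {p\<in>T. c = x})"
    by (rule fint_superset) auto
  then show ?thesis by simp
qed

lemma fint_ind: "B \<subseteq> T \<Longrightarrow> fint T \<mu> (ind B) = \<mu> B"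
proof -
  assume B: "B \<subseteq> T"
  have "fint T \<mu> (ind B) = (\<Sum>x\<in>{0,1}. x * \<mu> {p\<in>T. ind B p = x})"
    by (rule fint_superset) (auto simp: ind_def)
  also have "\<dots> = \<mu> {p\<in>T. ind B p = 1}" by simp
  also have "{p\<in>T. ind B p = 1} = B" using B by (auto simp: ind_def)
  finally show ?thesis .
qed

lemma fin_scale: "finite (s ` T) \<Longrightarrow> finite ((\<lambda>p. c * s p) ` T)"
  using finite_imageI[of "s ` T" "\<lambda>x. c * x"] by (simp add: image_image)

lemma fin_add: "finite (s ` T) \<Longrightarrow> finite (t ` T) \<Longrightarrow> finite ((\<lambda>p. s p + t p) ` T)"
proof -
  assume a: "finite (s ` T)" "finite (t ` T)"
  have "(\<lambda>p. s p + t p) ` T \<subseteq> (\<lambda>(a, b). a + b) ` (s ` T \<times> t ` T)" by force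
  moreover have "finite ((\<lambda>(a, b). a + b) ` (s ` T \<times> t ` T))" using a by simp
  ultimately show ?thesis by (rule finite_subset)
qed

lemma fin_const: "finite ((\<lambda>p. c) ` T)"
  by (rule finite_subset[of _ "{c}"]) auto

lemma fint_le_shift:
  assumes fs: "finite (s ` T)" and ft: "finite (t ` T)" and le: "\<forall>p\<in>T. s p \<le> t p + e"
  shows "fint T \<mu> s \<le> fint T \<mu> t + e * \<mu> T"
proof -
  have "fint T \<mu> (\<lambda>p. t p + e + (-1) * s p) \<ge> 0"
    by (rule fint_nonneg) (use le in auto)
  moreover have "fint T \<mu> (\<lambda>p. t p + e + (-1) * s p) = fint T \<mu> t + e * \<mu> T - fint T \<mu> s"
  proof -
    have f1: "finite ((\<lambda>p. t p + e) ` T)" by (rule fin_add[OF ft fin_const])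
    have f2: "finite ((\<lambda>p. (-1) * s p) ` T)" by (rule fin_scale[OF fs])
    have "fint T \<mu> (\<lambda>p. t p + e + (-1) * s p) = fint T \<mu> (\<lambda>p. t p + e) + fint T \<mu> (\<lambda>p. (-1) * s p)"
      by (rule fint_add[OF f1 f2])
    also have "fint T \<mu> (\<lambda>p. t p + e) = fint T \<mu> t + e * \<mu> T"
      using fint_add[OF ft fin_const, of e] fint_const by simp
    also have "fint T \<mu> (\<lambda>p. (-1) * s p) = - fint T \<mu> s"
      using fint_scale[OF fs, of "-1"] by simp
    finally show ?thesis by simp
  qed
  ultimately show ?thesis by simp
qed

end



lemma bdd_lin: "bdd_on T h1 \<Longrightarrow> bdd_on T h2 \<Longrightarrow> bdd_on T (\<lambda>p. a * h1 p + b * h2 p)"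
proof -
  assume "bdd_on T h1" "bdd_on T h2"
  then obtain C1 C2 where c: "\<forall>p\<in>T. \<bar>h1 p\<bar> \<le> C1" "\<forall>p\<in>T. \<bar>h2 p\<bar> \<le> C2" unfolding bdd_on_def by blast
  have "\<forall>p\<in>T. \<bar>a * h1 p + b * h2 p\<bar> \<le> \<bar>a\<bar> * C1 + \<bar>b\<bar> * C2"
  proof
    fix p assume p: "p \<in> T"
    have "\<bar>a * h1 p + b * h2 p\<bar> \<le> \<bar>a * h1 p\<bar> + \<bar>b * h2 p\<bar>" by (rule abs_triangle_ineq)
    then have "\<bar>a * h1 p + b * h2 p\<bar> \<le> \<bar>a\<bar> * \<bar>h1 p\<bar> + \<bar>b\<bar> * \<bar>h2 p\<bar>"
      by (simp add: abs_mult)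
    also have "\<dots> \<le> \<bar>a\<bar> * C1 + \<bar>b\<bar> * C2"
      using c p by (intro add_mono mult_left_mono) auto
    finally show "\<bar>a * h1 p + b * h2 p\<bar> \<le> \<bar>a\<bar> * C1 + \<bar>b\<bar> * C2" .
  qed
  then show ?thesis unfolding bdd_on_def by blast
qed

lemma bdd_const: "bdd_on T (\<lambda>p. c)"
  unfolding bdd_on_def by blast

lemma bdd_ind: "bdd_on T (ind B)"
  unfolding bdd_on_def ind_def by (rule exI[of _ 1]) auto

lemma fin_skf:
  assumes "bdd_on T h"
  shows "finite ((\<lambda>p. \<lfloor>real (Suc k) * h p\<rfloor>) ` T)"
proof -
  obtain C where C: "\<forall>p\<in>T. \<bar>h p\<bar> \<le> C" using assms unfolding bdd_on_def by blast
  have "(\<lambda>p. \<lfloor>real (Suc k) * h p\<rfloor>) ` T \<subseteq> {\<lfloor>- (real (Suc k) * C)\<rfloor> .. \<lfloor>real (Suc k) * C\<rfloor>}"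
  proof
    fix j assume "j \<in> (\<lambda>p. \<lfloor>real (Suc k) * h p\<rfloor>) ` T"
    then obtain p where p: "p \<in> T" "j = \<lfloor>real (Suc k) * h p\<rfloor>" by blast
    have "- C \<le> h p" "h p \<le> C" using C p by auto
    then have "- (real (Suc k) * C) \<le> real (Suc k) * h p" "real (Suc k) * h p \<le> real (Suc k) * C"
      using mult_left_mono[OF \<open>- C \<le> h p\<close>, of "real (Suc k)"] mult_left_mono[OF \<open>h p \<le> C\<close>, of "real (Suc k)"]
      by simp_all
    then show "j \<in> {\<lfloor>- (real (Suc k) * C)\<rfloor> .. \<lfloor>real (Suc k) * C\<rfloor>}"
      using p by (simp add: floor_mono)
  qed
  then show ?thesis by (rule finite_subset) simp
qed

lemma fin_skf2: "bdd_on T h \<Longrightarrow> finite ((skf k h) ` T)"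
proof -
  assume "bdd_on T h"
  then have "finite ((\<lambda>j. real_of_int j / real (Suc k)) ` (\<lambda>p. \<lfloor>real (Suc k) * h p\<rfloor>) ` T)"
    using fin_skf by blast
  then show ?thesis unfolding skf_def image_image .
qed

context pba
begin

lemma S_eq:
  assumes "bdd_on T h"
  shows "(\<Sum>j\<in>{\<lfloor>real (Suc k) * h p\<rfloor> | p. p \<in> T}. real_of_int j / real (Suc k) * \<mu> {p\<in>T. \<lfloor>real (Suc k) * h p\<rfloor> = j})
         = fint T \<mu> (skf k h)"
proof -
  have "fint T \<mu> (skf k h) = fint T \<mu> (\<lambda>p. (\<lambda>j. real_of_int j / real (Suc k)) ((\<lambda>p. \<lfloor>real (Suc k) * h p\<rfloor>) p))"
    unfolding skf_def by simp
  also have "\<dots> = (\<Sum>j\<in>(\<lambda>p. \<lfloor>real (Suc k) * h p\<rfloor>) ` T. real_of_int j / real (Suc k) * \<mu> {p\<in>T. \<lfloor>real (Suc k) * h p\<rfloor> = j})"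
    by (rule fint_key[OF fin_skf[OF assms]])
  finally show ?thesis by (simp add: Setcompr_eq_image)
qed

lemma fa_eq: "bdd_on T h \<Longrightarrow> fa_integral T \<mu> h = lim (\<lambda>k. fint T \<mu> (skf k h))"
  unfolding fa_integral_def using S_eq by simp

lemma muT: "\<mu> T \<ge> 0" using nonneg by simp

lemma skf_step:
  assumes "bdd_on T h"
  shows "fint T \<mu> (skf k h) \<le> fint T \<mu> (skf m h) + (1 / real (Suc m)) * \<mu> T"
proof (rule fint_le_shift[OF fin_skf2[OF assms] fin_skf2[OF assms]])
  show "\<forall>p\<in>T. skf k h p \<le> skf m h p + 1 / real (Suc m)"
  proof
    fix p show "skf k h p \<le> skf m h p + 1 / real (Suc m)" using skf_le[of k h p] skf_gt[of h p m] by linarith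
  qed
qed

lemma fa_lim:
  assumes "bdd_on T h"
  shows "(\<lambda>k. fint T \<mu> (skf k h)) \<longlonglongrightarrow> fa_integral T \<mu> h"
proof -
  let ?X = "\<lambda>k. fint T \<mu> (skf k h)"
  have "Cauchy ?X"
  proof (rule metric_CauchyI)
    fix e :: real assume e: "0 < e"
    obtain N where N: "inverse (real (Suc N)) < e / (\<mu> T + 1)"
      using reals_Archimedean[of "e / (\<mu> T + 1)"] e muT by auto
    have "\<forall>m\<ge>N. \<forall>n\<ge>N. dist (?X m) (?X n) < e"
    proof (intro allI impI)
      fix m n assume mn: "N \<le> m" "N \<le> n"
      have i1: "1 / real (Suc m) \<le> inverse (real (Suc N))" "1 / real (Suc n) \<le> inverse (real (Suc N))"
        using mn by (simp_all add: field_simps)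
      have a: "?X m \<le> ?X n + inverse (real (Suc N)) * \<mu> T"
        using skf_step[OF assms, of m n] mult_right_mono[OF i1(2) muT] by linarith
      have b: "?X n \<le> ?X m + inverse (real (Suc N)) * \<mu> T"
        using skf_step[OF assms, of n m] mult_right_mono[OF i1(1) muT] by linarith
      have "inverse (real (Suc N)) * \<mu> T \<le> e / (\<mu> T + 1) * \<mu> T"
        using N muT by (intro mult_right_mono) auto
      also have "\<dots> < e"
        using e muT by (simp add: field_simps)
      finally show "dist (?X m) (?X n) < e" using a b by (simp add: dist_real_def abs_le_iff)
    qed
    then show "\<exists>M. \<forall>m\<ge>M. \<forall>n\<ge>M. dist (?X m) (?X n) < e" by blast
  qed
  then have "?X \<longlonglongrightarrow> lim ?X" using Cauchy_convergent_iff convergent_LIMSEQ_iff by blast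
  then show ?thesis using fa_eq[OF assms] by simp
qed

lemma approx:
  assumes h: "bdd_on T h" and fs: "finite (s ` T)" and e: "\<forall>p\<in>T. \<bar>h p - s p\<bar> \<le> \<epsilon>"
  shows "\<bar>fa_integral T \<mu> h - fint T \<mu> s\<bar> \<le> \<epsilon> * \<mu> T"
proof -
  have up: "fint T \<mu> (skf k h) \<le> fint T \<mu> s + \<epsilon> * \<mu> T" for k
  proof (rule fint_le_shift[OF fin_skf2[OF h] fs])
    show "\<forall>p\<in>T. skf k h p \<le> s p + \<epsilon>"
    proof
      fix p assume "p \<in> T"
      then show "skf k h p \<le> s p + \<epsilon>" using e skf_le[of k h p] by (force simp: abs_le_iff)
    qed
  qed
  have U: "fa_integral T \<mu> h \<le> fint T \<mu> s + \<epsilon> * \<mu> T"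
    using LIMSEQ_le_const2[OF fa_lim[OF h]] up by blast
  have lo: "fint T \<mu> s \<le> fint T \<mu> (skf j h) + (\<epsilon> + 1 / real (Suc j)) * \<mu> T" for j
  proof (rule fint_le_shift[OF fs fin_skf2[OF h]])
    show "\<forall>p\<in>T. s p \<le> skf j h p + (\<epsilon> + 1 / real (Suc j))"
    proof
      fix p assume "p \<in> T"
      then have "s p \<le> h p + \<epsilon>" using e by (auto simp: abs_le_iff)
      then show "s p \<le> skf j h p + (\<epsilon> + 1 / real (Suc j))" using skf_gt[of h p j] by linarith
    qed
  qed
  have L: "fint T \<mu> s \<le> fa_integral T \<mu> h + \<epsilon> * \<mu> T + \<mu> T / real (Suc k)" for k
  proof -
    have "\<forall>j\<ge>k. fint T \<mu> s - (\<epsilon> + 1 / real (Suc k)) * \<mu> T \<le> fint T \<mu> (skf j h)"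
    proof (intro allI impI)
      fix j assume "k \<le> j"
      then have "1 / real (Suc j) \<le> 1 / real (Suc k)" by (simp add: field_simps)
      then have "(\<epsilon> + 1 / real (Suc j)) * \<mu> T \<le> (\<epsilon> + 1 / real (Suc k)) * \<mu> T"
        using muT by (intro mult_right_mono) auto
      then show "fint T \<mu> s - (\<epsilon> + 1 / real (Suc k)) * \<mu> T \<le> fint T \<mu> (skf j h)"
        using lo[of j] by linarith
    qed
    then have "fint T \<mu> s - (\<epsilon> + 1 / real (Suc k)) * \<mu> T \<le> fa_integral T \<mu> h"
      using LIMSEQ_le_const[OF fa_lim[OF h]] by blast
    then show ?thesis by (simp add: algebra_simps)
  qed
  have "fint T \<mu> s \<le> fa_integral T \<mu> h + \<epsilon> * \<mu> T"
    by (rule small_le[of _ _ "\<mu> T"]) (use L in \<open>simp add: add.assoc\<close>)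
  with U show ?thesis by (simp add: abs_le_iff)
qed

lemma fa_fint: "bdd_on T s \<Longrightarrow> finite (s ` T) \<Longrightarrow> fa_integral T \<mu> s = fint T \<mu> s"
  using approx[of s s 0] by simp

lemma fa_const: "fa_integral T \<mu> (\<lambda>p. c) = c * \<mu> T"
  using fa_fint[OF bdd_const fin_const] fint_const by simp

lemma fa_ind: "B \<subseteq> T \<Longrightarrow> fa_integral T \<mu> (ind B) = \<mu> B"
proof -
  assume B: "B \<subseteq> T"
  have "finite ((ind B) ` T)"
    by (rule finite_subset[of _ "{0,1}"]) (auto simp: ind_def)
  then show ?thesis using fa_fint[OF bdd_ind] fint_ind[OF B] by simp
qed

lemma skf_approx: "\<forall>p\<in>T. \<bar>h p - skf k h p\<bar> \<le> 1 / real (Suc k)"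
proof
  fix p show "\<bar>h p - skf k h p\<bar> \<le> 1 / real (Suc k)" using skf_le[of k h p] skf_gt[of h p k] by (simp add: abs_le_iff)
qed

lemma fa_lin:
  assumes h1: "bdd_on T h1" and h2: "bdd_on T h2"
  shows "fa_integral T \<mu> (\<lambda>p. a * h1 p + b * h2 p) = a * fa_integral T \<mu> h1 + b * fa_integral T \<mu> h2"
proof -
  let ?x = "fa_integral T \<mu> (\<lambda>p. a * h1 p + b * h2 p) - (a * fa_integral T \<mu> h1 + b * fa_integral T \<mu> h2)"
  have "\<bar>?x\<bar> \<le> (2 * (\<bar>a\<bar> + \<bar>b\<bar>) * \<mu> T) / real (Suc k)" for k
  proof -
    let ?s1 = "skf k h1" and ?s2 = "skf k h2"
    let ?s = "\<lambda>p. a * ?s1 p + b * ?s2 p"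
    have f1: "finite (?s1 ` T)" and f2: "finite (?s2 ` T)" using fin_skf2 h1 h2 by auto
    have fs: "finite (?s ` T)" by (rule fin_add[OF fin_scale[OF f1] fin_scale[OF f2]])
    have fsum: "fint T \<mu> ?s = a * fint T \<mu> ?s1 + b * fint T \<mu> ?s2"
      using fint_add[OF fin_scale[OF f1] fin_scale[OF f2]] fint_scale[OF f1] fint_scale[OF f2] by simp
    have e: "\<forall>p\<in>T. \<bar>(a * h1 p + b * h2 p) - ?s p\<bar> \<le> (\<bar>a\<bar> + \<bar>b\<bar>) * (1 / real (Suc k))"
    proof
      fix p assume p: "p \<in> T"
      have "\<bar>(a * h1 p + b * h2 p) - ?s p\<bar> = \<bar>a * (h1 p - ?s1 p) + b * (h2 p - ?s2 p)\<bar>"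
        by (simp add: algebra_simps)
      also have "\<dots> \<le> \<bar>a * (h1 p - ?s1 p)\<bar> + \<bar>b * (h2 p - ?s2 p)\<bar>" by (rule abs_triangle_ineq)
      also have "\<dots> = \<bar>a\<bar> * \<bar>h1 p - ?s1 p\<bar> + \<bar>b\<bar> * \<bar>h2 p - ?s2 p\<bar>" by (simp add: abs_mult)
      also have "\<dots> \<le> \<bar>a\<bar> * (1 / real (Suc k)) + \<bar>b\<bar> * (1 / real (Suc k))"
        using skf_approx[of h1 k] skf_approx[of h2 k] p by (intro add_mono mult_left_mono) auto
      finally show "\<bar>(a * h1 p + b * h2 p) - ?s p\<bar> \<le> (\<bar>a\<bar> + \<bar>b\<bar>) * (1 / real (Suc k))"
        by (simp only: distrib_right)
    qed
    have A: "\<bar>fa_integral T \<mu> (\<lambda>p. a * h1 p + b * h2 p) - fint T \<mu> ?s\<bar> \<le> (\<bar>a\<bar> + \<bar>b\<bar>) * (1 / real (Suc k)) * \<mu> T"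
      by (rule approx[OF bdd_lin[OF h1 h2] fs e])
    have B1: "\<bar>fa_integral T \<mu> h1 - fint T \<mu> ?s1\<bar> \<le> (1 / real (Suc k)) * \<mu> T"
      by (rule approx[OF h1 f1 skf_approx])
    have B2: "\<bar>fa_integral T \<mu> h2 - fint T \<mu> ?s2\<bar> \<le> (1 / real (Suc k)) * \<mu> T"
      by (rule approx[OF h2 f2 skf_approx])
    have C1: "\<bar>a * fa_integral T \<mu> h1 - a * fint T \<mu> ?s1\<bar> \<le> \<bar>a\<bar> * ((1 / real (Suc k)) * \<mu> T)"
    proof -
      have "\<bar>a * fa_integral T \<mu> h1 - a * fint T \<mu> ?s1\<bar> = \<bar>a\<bar> * \<bar>fa_integral T \<mu> h1 - fint T \<mu> ?s1\<bar>"
        by (simp add: abs_mult[symmetric] algebra_simps)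
      then show ?thesis using mult_left_mono[OF B1 abs_ge_zero[of a]] by simp
    qed
    have C2: "\<bar>b * fa_integral T \<mu> h2 - b * fint T \<mu> ?s2\<bar> \<le> \<bar>b\<bar> * ((1 / real (Suc k)) * \<mu> T)"
    proof -
      have "\<bar>b * fa_integral T \<mu> h2 - b * fint T \<mu> ?s2\<bar> = \<bar>b\<bar> * \<bar>fa_integral T \<mu> h2 - fint T \<mu> ?s2\<bar>"
        by (simp add: abs_mult[symmetric] algebra_simps)
      then show ?thesis using mult_left_mono[OF B2 abs_ge_zero[of b]] by simp
    qed
    have aux: "\<And>e::real. (\<bar>a\<bar> + \<bar>b\<bar>) * e * \<mu> T + \<bar>a\<bar> * (e * \<mu> T) + \<bar>b\<bar> * (e * \<mu> T) = 2 * (\<bar>a\<bar> + \<bar>b\<bar>) * \<mu> T * e"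
      by (simp add: algebra_simps)
    have "\<bar>?x\<bar> \<le> (\<bar>a\<bar> + \<bar>b\<bar>) * (1 / real (Suc k)) * \<mu> T + \<bar>a\<bar> * ((1 / real (Suc k)) * \<mu> T) + \<bar>b\<bar> * ((1 / real (Suc k)) * \<mu> T)"
      using A C1 C2 fsum by (simp add: abs_le_iff)
    also have "\<dots> = (2 * (\<bar>a\<bar> + \<bar>b\<bar>) * \<mu> T) * (1 / real (Suc k))"
      by (rule aux)
    also have "\<dots> = (2 * (\<bar>a\<bar> + \<bar>b\<bar>) * \<mu> T) / real (Suc k)" by simp
    finally show ?thesis .
  qed
  then have "?x = 0" by (rule small0)
  then show ?thesis by simp
qed

lemma fa_mono:
  assumes h1: "bdd_on T h1" and h2: "bdd_on T h2" and le: "\<forall>p\<in>T. h1 p \<le> h2 p"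
  shows "fa_integral T \<mu> h1 \<le> fa_integral T \<mu> h2"
proof (rule small_le[of _ _ "3 * \<mu> T"])
  fix k
  have f1: "finite (skf k h1 ` T)" and f2: "finite (skf k h2 ` T)" using fin_skf2 h1 h2 by auto
  have a: "fa_integral T \<mu> h1 \<le> fint T \<mu> (skf k h1) + (1 / real (Suc k)) * \<mu> T"
    using approx[OF h1 f1 skf_approx] by (simp add: abs_le_iff)
  have b: "fint T \<mu> (skf k h1) \<le> fint T \<mu> (skf k h2) + (1 / real (Suc k)) * \<mu> T"
  proof (rule fint_le_shift[OF f1 f2])
    show "\<forall>p\<in>T. skf k h1 p \<le> skf k h2 p + 1 / real (Suc k)"
    proof
      fix p assume "p \<in> T"
      then show "skf k h1 p \<le> skf k h2 p + 1 / real (Suc k)" using skf_le[of k h1 p] skf_gt[of h2 p k] le by force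
    qed
  qed
  have c: "fint T \<mu> (skf k h2) \<le> fa_integral T \<mu> h2 + (1 / real (Suc k)) * \<mu> T"
    using approx[OF h2 f2 skf_approx] by (simp add: abs_le_iff)
  show "fa_integral T \<mu> h1 \<le> fa_integral T \<mu> h2 + 3 * \<mu> T / real (Suc k)"
    using a b c by (simp add: field_simps)
qed

lemma fa_bound:
  assumes "\<forall>p\<in>T. \<bar>h p\<bar> \<le> C"
  shows "\<bar>fa_integral T \<mu> h\<bar> \<le> C * \<mu> T"
proof -
  have hb: "bdd_on T h" using assms unfolding bdd_on_def by blast
  have "fa_integral T \<mu> h \<le> fa_integral T \<mu> (\<lambda>p. C)"
    by (rule fa_mono[OF hb bdd_const]) (use assms in \<open>auto simp: abs_le_iff\<close>)
  moreover have "fa_integral T \<mu> (\<lambda>p. - C) \<le> fa_integral T \<mu> h"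
    by (rule fa_mono[OF bdd_const hb]) (use assms in \<open>auto simp: abs_le_iff\<close>)
  ultimately show ?thesis using fa_const[of C] fa_const[of "-C"] by (simp add: abs_le_iff)
qed

end



definition lincl :: "(('b \<Rightarrow> real) \<times> real) set \<Rightarrow> bool" where
  "lincl G \<longleftrightarrow> (\<forall>x a y b s t. (x, a) \<in> G \<longrightarrow> (y, b) \<in> G \<longrightarrow> ((\<lambda>q. s * x q + t * y q), s * a + t * b) \<in> G)"

lemma lincl_scale: "lincl G \<Longrightarrow> (y, a) \<in> G \<Longrightarrow> ((\<lambda>q. s * y q), s * a) \<in> G"
proof -
  assume "lincl G" "(y, a) \<in> G"
  then have "((\<lambda>q. s * y q + 0 * y q), s * a + 0 * a) \<in> G" unfolding lincl_def by blast
  then show ?thesis by simp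
qed

lemma lincl_add: "lincl G \<Longrightarrow> (x, a) \<in> G \<Longrightarrow> (y, b) \<in> G \<Longrightarrow> ((\<lambda>q. x q + y q), a + b) \<in> G"
proof -
  assume "lincl G" "(x, a) \<in> G" "(y, b) \<in> G"
  then have "((\<lambda>q. 1 * x q + 1 * y q), 1 * a + 1 * b) \<in> G" unfolding lincl_def by blast
  then show ?thesis by simp
qed

lemma HB:
  fixes V W :: "('b \<Rightarrow> real) set" and p g :: "('b \<Rightarrow> real) \<Rightarrow> real"
  assumes Vcl: "\<And>x y s t. x \<in> V \<Longrightarrow> y \<in> V \<Longrightarrow> (\<lambda>q. s * x q + t * y q) \<in> V"
    and sub: "\<And>x y. x \<in> V \<Longrightarrow> y \<in> V \<Longrightarrow> p (\<lambda>q. x q + y q) \<le> p x + p y"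
    and hom: "\<And>x c. x \<in> V \<Longrightarrow> c > 0 \<Longrightarrow> p (\<lambda>q. c * x q) = c * p x"
    and WV: "W \<subseteq> V"
    and Wcl: "\<And>x y s t. x \<in> W \<Longrightarrow> y \<in> W \<Longrightarrow> (\<lambda>q. s * x q + t * y q) \<in> W"
    and Wne: "W \<noteq> {}"
    and glin: "\<And>x y s t. x \<in> W \<Longrightarrow> y \<in> W \<Longrightarrow> g (\<lambda>q. s * x q + t * y q) = s * g x + t * g y"
    and gdom: "\<And>x. x \<in> W \<Longrightarrow> g x \<le> p x"
  shows "\<exists>\<psi>. (\<forall>x\<in>V. \<forall>y\<in>V. \<forall>s t. \<psi> (\<lambda>q. s * x q + t * y q) = s * \<psi> x + t * \<psi> y) \<and>
             (\<forall>x\<in>V. \<psi> x \<le> p x) \<and> (\<forall>x\<in>W. \<psi> x = g x)"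
proof -
  have Vadd: "(\<lambda>q. x q + y q) \<in> V" if "x \<in> V" "y \<in> V" for x y
    using Vcl[OF that, of 1 1] by simp
  have Vdiff: "(\<lambda>q. x q - y q) \<in> V" if "x \<in> V" "y \<in> V" for x y
    using Vcl[OF that, of 1 "-1"] by simp
  have Vscale: "(\<lambda>q. s * x q) \<in> V" if "x \<in> V" for x s
    using Vcl[OF that that, of s 0] by simp
  define G0 where "G0 = {(x, g x) | x. x \<in> W}"
  define \<A> where "\<A> = {G. G \<subseteq> V \<times> UNIV \<and> lincl G \<and> (\<forall>(x, a)\<in>G. a \<le> p x) \<and> G0 \<subseteq> G}"
  have G0A: "G0 \<in> \<A>"
    unfolding \<A>_def G0_def lincl_def using WV Wcl glin gdom by fastforce
  have "\<forall>C\<in>chains \<A>. \<exists>U\<in>\<A>. \<forall>X\<in>C. X \<subseteq> U"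
  proof
    fix C assume C: "C \<in> chains \<A>"
    show "\<exists>U\<in>\<A>. \<forall>X\<in>C. X \<subseteq> U"
    proof (cases "C = {}")
      case True
      then show ?thesis using G0A by blast
    next
      case False
      have CA: "C \<subseteq> \<A>" and ch: "\<forall>A\<in>C. \<forall>B\<in>C. A \<subseteq> B \<or> B \<subseteq> A"
        using C unfolding chains_def chain_subset_def by auto
      have "\<Union>C \<in> \<A>"
        unfolding \<A>_def
      proof (intro CollectI conjI)
        show "\<Union>C \<subseteq> V \<times> UNIV" using CA unfolding \<A>_def by blast
        show "\<forall>(x, a)\<in>\<Union>C. a \<le> p x" using CA unfolding \<A>_def by blast
        show "G0 \<subseteq> \<Union>C" using CA False unfolding \<A>_def by blast
        show "lincl (\<Union>C)"
          unfolding lincl_def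
        proof (intro allI impI)
          fix x a y b s t assume xa: "(x, a) \<in> \<Union>C" and yb: "(y, b) \<in> \<Union>C"
          then obtain X Y where X: "X \<in> C" "(x, a) \<in> X" and Y: "Y \<in> C" "(y, b) \<in> Y" by blast
          show "((\<lambda>q. s * x q + t * y q), s * a + t * b) \<in> \<Union>C"
          proof (cases "X \<subseteq> Y")
            case True
            then have "lincl Y" using CA Y unfolding \<A>_def by blast
            then show ?thesis using X Y True unfolding lincl_def by blast
          next
            case False
            then have "Y \<subseteq> X" using ch X Y by blast
            moreover have "lincl X" using CA X unfolding \<A>_def by blast
            ultimately show ?thesis using X Y unfolding lincl_def by blast
          qed
        qed
      qed
      then show ?thesis by blast
    qed
  qed
  from Zorn_Lemma2[OF this] obtain Gm where GmA: "Gm \<in> \<A>" and max: "\<forall>X\<in>\<A>. Gm \<subseteq> X \<longrightarrow> X = Gm"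
    by blast
  have GmV: "Gm \<subseteq> V \<times> UNIV" and lin: "lincl Gm" and dom: "\<And>x a. (x, a) \<in> Gm \<Longrightarrow> a \<le> p x"
    and G0G: "G0 \<subseteq> Gm"
    using GmA unfolding \<A>_def by auto
  obtain w where w: "w \<in> W" using Wne by blast
  have wG: "(w, g w) \<in> Gm" using w G0G unfolding G0_def by blast
  have zero: "((\<lambda>q. 0), 0) \<in> Gm" using lincl_scale[OF lin wG, of 0] by simp
  have uniq: "a = b" if "(x, a) \<in> Gm" "(x, b) \<in> Gm" for x a b
  proof (rule ccontr)
    assume ne: "a \<noteq> b"
    have "((\<lambda>q. 1 * x q + (-1) * x q), 1 * a + (-1) * b) \<in> Gm"
      using lin that unfolding lincl_def by blast
    then have z: "((\<lambda>q. 0), a - b) \<in> Gm" by simp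
    define t where "t = (\<bar>p (\<lambda>q. 0)\<bar> + 1) / (a - b)"
    have "((\<lambda>q. t * 0), t * (a - b)) \<in> Gm" using lincl_scale[OF lin z, of t] by simp
    then have "t * (a - b) \<le> p (\<lambda>q. 0)" using dom by simp
    moreover have "t * (a - b) = \<bar>p (\<lambda>q. 0)\<bar> + 1" using ne unfolding t_def by simp
    ultimately show False by simp
  qed
  have total: "\<exists>a. (x, a) \<in> Gm" if xV: "x \<in> V" for x
  proof (rule ccontr)
    assume nx: "\<nexists>a. (x, a) \<in> Gm"
    define S where "S = {a - p (\<lambda>q. y q - x q) | y a. (y, a) \<in> Gm}"
    define c where "c = Sup S"
    have Sne: "S \<noteq> {}" using zero unfolding S_def by blast
    have Sbd: "s \<le> p (\<lambda>q. y' q + x q) - a'" if "s \<in> S" "(y', a') \<in> Gm" for s y' a'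
    proof -
      obtain y a where ya: "(y, a) \<in> Gm" "s = a - p (\<lambda>q. y q - x q)" using \<open>s \<in> S\<close> unfolding S_def by blast
      have yV: "y \<in> V" and y'V: "y' \<in> V" using ya that GmV by auto
      have "((\<lambda>q. y q + y' q), a + a') \<in> Gm" by (rule lincl_add[OF lin ya(1) that(2)])
      then have "a + a' \<le> p (\<lambda>q. y q + y' q)" using dom by blast
      also have "(\<lambda>q. y q + y' q) = (\<lambda>q. (\<lambda>q. y q - x q) q + (\<lambda>q. y' q + x q) q)" by auto
      also have "p \<dots> \<le> p (\<lambda>q. y q - x q) + p (\<lambda>q. y' q + x q)"
        by (rule sub) (use Vdiff Vadd yV y'V xV in auto)
      finally show ?thesis using ya by simp
    qed
    have c_up: "c \<le> p (\<lambda>q. y' q + x q) - a'" if "(y', a') \<in> Gm" for y' a'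
      unfolding c_def by (rule cSup_least[OF Sne]) (use Sbd that in blast)
    have bddS: "bdd_above S" using Sbd zero unfolding bdd_above_def by blast
    have c_lo: "a - p (\<lambda>q. y q - x q) \<le> c" if "(y, a) \<in> Gm" for y a
      unfolding c_def by (rule cSup_upper[OF _ bddS]) (use that S_def in blast)
    define G' where "G' = {((\<lambda>q. y q + t * x q), a + t * c) | y a t. (y, a) \<in> Gm}"
    have G'I: "((\<lambda>q. y q + t * x q), a + t * c) \<in> G'" if "(y, a) \<in> Gm" for y a t
      unfolding G'_def using that by blast
    have G'A: "G' \<in> \<A>"
      unfolding \<A>_def
    proof (intro CollectI conjI)
      show "G' \<subseteq> V \<times> UNIV"
      proof
        fix u assume "u \<in> G'"
        then obtain y a t where "u = ((\<lambda>q. y q + t * x q), a + t * c)" "(y, a) \<in> Gm" unfolding G'_def by blast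
        moreover then have "y \<in> V" using GmV by auto
        ultimately show "u \<in> V \<times> UNIV" using Vadd Vscale xV by auto
      qed
      show "G0 \<subseteq> G'"
      proof
        fix u assume "u \<in> G0"
        then obtain y a where ya: "u = (y, a)" "(y, a) \<in> Gm" using G0G by (metis prod.exhaust subsetD)
        have "u = ((\<lambda>q. y q + 0 * x q), a + 0 * c)" using ya by simp
        then show "u \<in> G'" unfolding G'_def using ya by blast
      qed
      show "lincl G'"
        unfolding lincl_def
      proof (intro allI impI)
        fix u1 a1 u2 a2 s t assume u1: "(u1, a1) \<in> G'" and u2: "(u2, a2) \<in> G'"
        obtain y1 b1 t1 where y1: "u1 = (\<lambda>q. y1 q + t1 * x q)" "a1 = b1 + t1 * c" "(y1, b1) \<in> Gm"
          using u1 unfolding G'_def by blast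
        obtain y2 b2 t2 where y2: "u2 = (\<lambda>q. y2 q + t2 * x q)" "a2 = b2 + t2 * c" "(y2, b2) \<in> Gm"
          using u2 unfolding G'_def by blast
        have m: "((\<lambda>q. s * y1 q + t * y2 q), s * b1 + t * b2) \<in> Gm"
          using lin y1(3) y2(3) unfolding lincl_def by blast
        have e1: "(\<lambda>q. s * u1 q + t * u2 q) = (\<lambda>q. (\<lambda>q. s * y1 q + t * y2 q) q + (s * t1 + t * t2) * x q)"
          using y1 y2 by (auto simp: algebra_simps)
        have e2: "s * a1 + t * a2 = (s * b1 + t * b2) + (s * t1 + t * t2) * c"
          using y1 y2 by (simp add: algebra_simps)
        show "((\<lambda>q. s * u1 q + t * u2 q), s * a1 + t * a2) \<in> G'"
          unfolding e1 e2 using G'I[OF m] by simp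
      qed
      show "\<forall>(u, a)\<in>G'. a \<le> p u"
      proof
        fix ua assume "ua \<in> G'"
        then obtain y a t where ua: "ua = ((\<lambda>q. y q + t * x q), a + t * c)" and ya: "(y, a) \<in> Gm"
          unfolding G'_def by blast
        have yV: "y \<in> V" using ya GmV by auto
        have "a + t * c \<le> p (\<lambda>q. y q + t * x q)"
        proof (cases "t = 0")
          case True
          then show ?thesis using dom[OF ya] by simp
        next
          case False
          show ?thesis
          proof (cases "t > 0")
            case True
            have m: "((\<lambda>q. (1 / t) * y q), (1 / t) * a) \<in> Gm" by (rule lincl_scale[OF lin ya])
            have "c \<le> p (\<lambda>q. (1 / t) * y q + x q) - (1 / t) * a" by (rule c_up[OF m])
            then have "t * c \<le> t * p (\<lambda>q. (1 / t) * y q + x q) - a"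
              using True by (simp add: field_simps)
            also have "t * p (\<lambda>q. (1 / t) * y q + x q) = p (\<lambda>q. t * ((\<lambda>q. (1 / t) * y q + x q) q))"
              by (rule hom[symmetric, OF Vadd[OF Vscale[OF yV] xV]]) (use True in simp)
            also have "(\<lambda>q. t * ((\<lambda>q. (1 / t) * y q + x q) q)) = (\<lambda>q. y q + t * x q)"
              using True by (auto simp: field_simps)
            finally show ?thesis by simp
          next
            case False
            then have r: "- t > 0" using \<open>t \<noteq> 0\<close> by simp
            have m: "((\<lambda>q. (1 / (- t)) * y q), (1 / (- t)) * a) \<in> Gm" by (rule lincl_scale[OF lin ya])
            have "(1 / (- t)) * a - p (\<lambda>q. (1 / (- t)) * y q - x q) \<le> c" by (rule c_lo[OF m])
            then have "a - (- t) * p (\<lambda>q. (1 / (- t)) * y q - x q) \<le> (- t) * c"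
              using r by (simp add: field_simps)
            also have "(- t) * p (\<lambda>q. (1 / (- t)) * y q - x q) = p (\<lambda>q. (- t) * ((\<lambda>q. (1 / (- t)) * y q - x q) q))"
              by (rule hom[symmetric, OF Vdiff[OF Vscale[OF yV] xV]]) (use r in simp)
            also have "(\<lambda>q. (- t) * ((\<lambda>q. (1 / (- t)) * y q - x q) q)) = (\<lambda>q. y q + t * x q)"
              using r by (auto simp: field_simps)
            finally show ?thesis by simp
          qed
        qed
        then show "case ua of (u, a) \<Rightarrow> a \<le> p u" using ua by simp
      qed
    qed
    have "Gm \<subseteq> G'"
    proof
      fix u assume uG: "u \<in> Gm"
      then obtain y a where ya: "u = (y, a)" by (metis prod.exhaust)
      show "u \<in> G'" using G'I[of y a 0] ya uG by simp
    qed
    then have "G' = Gm" using max G'A by blast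
    moreover have "(x, c) \<in> G'"
    proof -
      show ?thesis using G'I[OF zero, of 1] by simp
    qed
    ultimately show False using nx by blast
  qed
  define \<psi> where "\<psi> x = (THE a. (x, a) \<in> Gm)" for x
  have psi: "(x, \<psi> x) \<in> Gm" if xV: "x \<in> V" for x
  proof -
    obtain a where a: "(x, a) \<in> Gm" using total[OF xV] by blast
    have "\<psi> x = a" unfolding \<psi>_def by (rule the_equality) (use a uniq in blast)+
    then show ?thesis using a by simp
  qed
  show ?thesis
  proof (intro exI conjI ballI allI)
    fix x y s t assume x: "x \<in> V" and y: "y \<in> V"
    have "((\<lambda>q. s * x q + t * y q), s * \<psi> x + t * \<psi> y) \<in> Gm"
      using lin psi[OF x] psi[OF y] unfolding lincl_def by blast
    moreover have "((\<lambda>q. s * x q + t * y q), \<psi> (\<lambda>q. s * x q + t * y q)) \<in> Gm"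
      by (rule psi[OF Vcl[OF x y]])
    ultimately show "\<psi> (\<lambda>q. s * x q + t * y q) = s * \<psi> x + t * \<psi> y" using uniq by blast
  next
    fix x assume "x \<in> V"
    then show "\<psi> x \<le> p x" using psi dom by blast
  next
    fix x assume x: "x \<in> W"
    then have "(x, g x) \<in> Gm" using G0G unfolding G0_def by blast
    then show "\<psi> x = g x" using psi[of x] x WV uniq by blast
  qed
qed



context Metric_space
begin

lemma dxx: "x \<in> M \<Longrightarrow> d x x = 0" by simp

lemma lipset_bdd:
  assumes "\<forall>x\<in>M. \<forall>y\<in>M. \<bar>f x - f y\<bar> \<le> L * d x y"
  shows "bdd_above ({\<bar>f x - f y\<bar> / d x y | x y. x \<in> M \<and> y \<in> M \<and> x \<noteq> y} \<union> {0})"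
proof -
  have "\<forall>s\<in>{\<bar>f x - f y\<bar> / d x y | x y. x \<in> M \<and> y \<in> M \<and> x \<noteq> y} \<union> {0}. s \<le> max L 0"
  proof
    fix s assume "s \<in> {\<bar>f x - f y\<bar> / d x y | x y. x \<in> M \<and> y \<in> M \<and> x \<noteq> y} \<union> {0}"
    then consider "s = 0" | x y where "x \<in> M" "y \<in> M" "x \<noteq> y" "s = \<bar>f x - f y\<bar> / d x y" by blast
    then show "s \<le> max L 0"
    proof cases
      case 1 then show ?thesis by simp
    next
      case 2
      then have dp: "d x y > 0" using nonneg[of x y] zero[of x y] by linarith
      have "\<bar>f x - f y\<bar> \<le> L * d x y" using assms 2 by blast
      then have "s \<le> L" using 2 dp by (simp add: divide_le_eq)
      then show ?thesis by simp
    qed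
  qed
  then show ?thesis unfolding bdd_above_def by blast
qed

lemma lipnorm_nonneg:
  assumes "\<forall>x\<in>M. \<forall>y\<in>M. \<bar>f x - f y\<bar> \<le> L * d x y"
  shows "0 \<le> lipnorm M d f"
  unfolding lipnorm_def by (rule cSup_upper[OF _ lipset_bdd[OF assms]]) simp

lemma lipnorm_ge:
  assumes "\<forall>x\<in>M. \<forall>y\<in>M. \<bar>f x - f y\<bar> \<le> L * d x y" "x \<in> M" "y \<in> M" "x \<noteq> y"
  shows "\<bar>f x - f y\<bar> / d x y \<le> lipnorm M d f"
  unfolding lipnorm_def by (rule cSup_upper[OF _ lipset_bdd[OF assms(1)]]) (use assms in blast)

lemma lip_le:
  assumes "\<forall>x\<in>M. \<forall>y\<in>M. \<bar>f x - f y\<bar> \<le> L * d x y" "x \<in> M" "y \<in> M"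
  shows "\<bar>f x - f y\<bar> \<le> lipnorm M d f * d x y"
proof (cases "x = y")
  case True then show ?thesis using lipnorm_nonneg[OF assms(1)] by simp
next
  case False
  then have dp: "d x y > 0" using nonneg[of x y] zero[of x y] assms by linarith
  have "\<bar>f x - f y\<bar> / d x y \<le> lipnorm M d f" by (rule lipnorm_ge[OF assms False])
  then show ?thesis using dp by (simp add: divide_le_eq)
qed

lemma lipnorm_le:
  assumes "0 \<le> L" "\<forall>x\<in>M. \<forall>y\<in>M. \<bar>f x - f y\<bar> \<le> L * d x y"
  shows "lipnorm M d f \<le> L"
  unfolding lipnorm_def
proof (rule cSup_least)
  show "{\<bar>f x - f y\<bar> / d x y | x y. x \<in> M \<and> y \<in> M \<and> x \<noteq> y} \<union> {0} \<noteq> {}" by simp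
  fix s assume "s \<in> {\<bar>f x - f y\<bar> / d x y | x y. x \<in> M \<and> y \<in> M \<and> x \<noteq> y} \<union> {0}"
  then consider "s = 0" | x y where "x \<in> M" "y \<in> M" "x \<noteq> y" "s = \<bar>f x - f y\<bar> / d x y" by blast
  then show "s \<le> L"
  proof cases
    case 1 then show ?thesis using assms by simp
  next
    case 2
    then have dp: "d x y > 0" using nonneg[of x y] zero[of x y] by linarith
    have "\<bar>f x - f y\<bar> \<le> L * d x y" using assms 2 by blast
    then show ?thesis using 2 dp by (simp add: divide_le_eq)
  qed
qed

lemma lip0_bound: "f \<in> lip0 M d z \<Longrightarrow> \<exists>L. \<forall>x\<in>M. \<forall>y\<in>M. \<bar>f x - f y\<bar> \<le> L * d x y"
  unfolding lip0_def by blast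

lemma ball_lip:
  assumes "f \<in> lip0_ball M d z" "x \<in> M" "y \<in> M"
  shows "\<bar>f x - f y\<bar> \<le> d x y"
proof -
  have f: "f \<in> lip0 M d z" "lipnorm M d f \<le> 1" using assms unfolding lip0_ball_def by auto
  obtain L where L: "\<forall>x\<in>M. \<forall>y\<in>M. \<bar>f x - f y\<bar> \<le> L * d x y" using lip0_bound[OF f(1)] by blast
  have "\<bar>f x - f y\<bar> \<le> lipnorm M d f * d x y" by (rule lip_le[OF L assms(2,3)])
  also have "\<dots> \<le> 1 * d x y" using f(2) by (intro mult_right_mono) auto
  finally show ?thesis by simp
qed

lemma ball_intro:
  assumes "f z = 0" "\<forall>x. x \<notin> M \<longrightarrow> f x = 0" "\<forall>x\<in>M. \<forall>y\<in>M. \<bar>f x - f y\<bar> \<le> d x y"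
  shows "f \<in> lip0_ball M d z"
proof -
  have L: "\<forall>x\<in>M. \<forall>y\<in>M. \<bar>f x - f y\<bar> \<le> 1 * d x y" using assms by simp
  then have "f \<in> lip0 M d z" unfolding lip0_def using assms by blast
  moreover have "lipnorm M d f \<le> 1" by (rule lipnorm_le[OF _ L]) simp
  ultimately show ?thesis unfolding lip0_ball_def by blast
qed

lemma mcshane:
  assumes QM: "Q \<subseteq> M" and Qne: "Q \<noteq> {}" and L: "\<forall>x\<in>Q. \<forall>y\<in>Q. \<bar>F0 x - F0 y\<bar> \<le> d x y"
  shows "\<exists>F. (\<forall>x\<in>M. \<forall>y\<in>M. \<bar>F x - F y\<bar> \<le> d x y) \<and> (\<forall>x\<in>Q. F x = F0 x)"
proof -
  obtain q0 where q0: "q0 \<in> Q" using Qne by blast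
  define F where "F x = Inf ((\<lambda>q. F0 q + d x q) ` Q)" for x
  have bdd: "bdd_below ((\<lambda>q. F0 q + d x q) ` Q)" if x: "x \<in> M" for x
  proof -
    have "\<forall>q\<in>Q. F0 q0 - d x q0 \<le> F0 q + d x q"
    proof
      fix q assume q: "q \<in> Q"
      have "F0 q0 - F0 q \<le> d q0 q" using L q q0 by (auto simp: abs_le_iff)
      moreover have "d q0 q \<le> d q0 x + d x q" using triangle q q0 QM x by blast
      moreover have "d q0 x = d x q0" by (rule commute)
      ultimately show "F0 q0 - d x q0 \<le> F0 q + d x q" by linarith
    qed
    then show ?thesis unfolding bdd_below_def by blast
  qed
  have Fle: "F x \<le> F0 q + d x q" if "x \<in> M" "q \<in> Q" for x q
    unfolding F_def by (rule cInf_lower[OF _ bdd[OF that(1)]]) (use that in blast)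
  have step: "F x \<le> F y + d x y" if x: "x \<in> M" and y: "y \<in> M" for x y
  proof -
    have "F x - d x y \<le> F y"
      unfolding F_def[of y]
    proof (rule cInf_greatest)
      show "(\<lambda>q. F0 q + d y q) ` Q \<noteq> {}" using Qne by blast
      fix s assume "s \<in> (\<lambda>q. F0 q + d y q) ` Q"
      then obtain q where q: "q \<in> Q" "s = F0 q + d y q" by blast
      have "F x \<le> F0 q + d x q" by (rule Fle[OF x q(1)])
      moreover have "d x q \<le> d x y + d y q" using triangle x y q QM by blast
      ultimately show "F x - d x y \<le> s" using q by linarith
    qed
    then show ?thesis by simp
  qed
  have "\<forall>x\<in>M. \<forall>y\<in>M. \<bar>F x - F y\<bar> \<le> d x y"
  proof (intro ballI)
    fix x y assume x: "x \<in> M" and y: "y \<in> M"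
    show "\<bar>F x - F y\<bar> \<le> d x y" using step[OF x y] step[OF y x] commute[of x y] by (simp add: abs_le_iff)
  qed
  moreover have "\<forall>x\<in>Q. F x = F0 x"
  proof
    fix x assume x: "x \<in> Q"
    then have xM: "x \<in> M" using QM by blast
    have "F x \<le> F0 x" using Fle[OF xM x] xM by simp
    moreover have "F0 x \<le> F x"
      unfolding F_def
    proof (rule cInf_greatest)
      show "(\<lambda>q. F0 q + d x q) ` Q \<noteq> {}" using Qne by blast
      fix s assume "s \<in> (\<lambda>q. F0 q + d x q) ` Q"
      then obtain q where q: "q \<in> Q" "s = F0 q + d x q" by blast
      have "F0 x - F0 q \<le> d x q" using L x q by (auto simp: abs_le_iff)
      then show "F0 x \<le> s" using q by linarith
    qed
    ultimately show "F x = F0 x" by simp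
  qed
  ultimately show ?thesis by blast
qed

lemma ext2:
  assumes PM: "P \<subseteq> M" and Pne: "P \<noteq> {}" and hL: "\<forall>x\<in>P. \<forall>y\<in>P. \<bar>h x - h y\<bar> \<le> d x y"
    and a: "a \<in> M" and b: "b \<in> M" and ab: "a \<noteq> b" and g0: "0 \<le> \<gamma>" and g1: "\<gamma> \<le> 1"
    and cond: "\<forall>x\<in>P. \<forall>y\<in>P. h x - h y + \<gamma> * d a b \<le> d x a + d y b"
  shows "\<exists>F. (\<forall>x\<in>M. \<forall>y\<in>M. \<bar>F x - F y\<bar> \<le> d x y) \<and> (\<forall>x\<in>P. F x = h x) \<and> \<gamma> * d a b \<le> F b - F a"
proof -
  obtain x0 where x0: "x0 \<in> P" using Pne by blast
  have hle: "h x - h y \<le> d x y" if "x \<in> P" "y \<in> P" for x y using hL that by (auto simp: abs_le_iff)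
  have tri: "d x z \<le> d x y + d y z" if "x \<in> M" "y \<in> M" "z \<in> M" for x y z using triangle that by blast
  define Fa where "Fa = Sup ((\<lambda>x. h x - d x a) ` P)"
  define I where "I = Inf ((\<lambda>y. h y + d y b) ` P)"
  define Fb where "Fb = min I (Fa + d a b)"
  have bA: "bdd_above ((\<lambda>x. h x - d x a) ` P)"
  proof -
    have "\<forall>x\<in>P. h x - d x a \<le> h x0 + d x0 a"
    proof
      fix x assume x: "x \<in> P"
      have "h x - h x0 \<le> d x x0" by (rule hle[OF x x0])
      moreover have "d x x0 \<le> d x a + d a x0" using tri x x0 PM a by blast
      moreover have "d a x0 = d x0 a" by (rule commute)
      ultimately show "h x - d x a \<le> h x0 + d x0 a" by linarith
    qed
    then show ?thesis unfolding bdd_above_def by blast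
  qed
  have bB: "bdd_below ((\<lambda>y. h y + d y b) ` P)"
  proof -
    have "\<forall>y\<in>P. h x0 - d x0 b \<le> h y + d y b"
    proof
      fix y assume y: "y \<in> P"
      have "h x0 - h y \<le> d x0 y" by (rule hle[OF x0 y])
      moreover have "d x0 y \<le> d x0 b + d b y" using tri x0 y PM b by blast
      moreover have "d b y = d y b" by (rule commute)
      ultimately show "h x0 - d x0 b \<le> h y + d y b" by linarith
    qed
    then show ?thesis unfolding bdd_below_def by blast
  qed
  have Fa_ge: "h x - d x a \<le> Fa" if "x \<in> P" for x
    unfolding Fa_def by (rule cSup_upper[OF _ bA]) (use that in blast)
  have Fa_le: "Fa \<le> h y + d y a" if y: "y \<in> P" for y
    unfolding Fa_def
  proof (rule cSup_least)
    show "(\<lambda>x. h x - d x a) ` P \<noteq> {}" using Pne by blast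
    fix s assume "s \<in> (\<lambda>x. h x - d x a) ` P"
    then obtain x where x: "x \<in> P" "s = h x - d x a" by blast
    have "h x - h y \<le> d x y" by (rule hle[OF x(1) y])
    moreover have "d x y \<le> d x a + d a y" using tri x y PM a by blast
    moreover have "d a y = d y a" by (rule commute)
    ultimately show "s \<le> h y + d y a" using x by linarith
  qed
  have I_le: "I \<le> h y + d y b" if "y \<in> P" for y
    unfolding I_def by (rule cInf_lower[OF _ bB]) (use that in blast)
  have I_ge: "h x - d x b \<le> I" if x: "x \<in> P" for x
    unfolding I_def
  proof (rule cInf_greatest)
    show "(\<lambda>y. h y + d y b) ` P \<noteq> {}" using Pne by blast
    fix s assume "s \<in> (\<lambda>y. h y + d y b) ` P"
    then obtain y where y: "y \<in> P" "s = h y + d y b" by blast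
    have "h x - h y \<le> d x y" by (rule hle[OF x y(1)])
    moreover have "d x y \<le> d x b + d b y" using tri x y PM b by blast
    moreover have "d b y = d y b" by (rule commute)
    ultimately show "h x - d x b \<le> s" using y by linarith
  qed
  have key: "Fa + \<gamma> * d a b \<le> I"
  proof -
    have "Fa \<le> I - \<gamma> * d a b"
      unfolding I_def
    proof -
      have "\<forall>y\<in>P. Fa \<le> h y + d y b - \<gamma> * d a b"
      proof
        fix y assume y: "y \<in> P"
        show "Fa \<le> h y + d y b - \<gamma> * d a b"
          unfolding Fa_def
        proof (rule cSup_least)
          show "(\<lambda>x. h x - d x a) ` P \<noteq> {}" using Pne by blast
          fix s assume "s \<in> (\<lambda>x. h x - d x a) ` P"
          then obtain x where x: "x \<in> P" "s = h x - d x a" by blast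
          show "s \<le> h y + d y b - \<gamma> * d a b" using cond x y by force
        qed
      qed
      then have "\<forall>s\<in>(\<lambda>y. h y + d y b) ` P. Fa + \<gamma> * d a b \<le> s" by force
      then have "Fa + \<gamma> * d a b \<le> Inf ((\<lambda>y. h y + d y b) ` P)"
        by (intro cInf_greatest) (use Pne in auto)
      then show "Fa \<le> Inf ((\<lambda>y. h y + d y b) ` P) - \<gamma> * d a b" by simp
    qed
    then show ?thesis by simp
  qed
  have dab: "0 \<le> d a b" by simp
  have gab: "\<gamma> * d a b \<le> d a b" using mult_right_mono[OF g1 dab] by simp
  have Fb_ge: "Fa + \<gamma> * d a b \<le> Fb" unfolding Fb_def using key gab by simp
  have Fb_le: "Fb \<le> Fa + d a b" unfolding Fb_def by simp
  have FaP: "Fa = h a" if "a \<in> P" using Fa_ge[OF that] Fa_le[OF that] a by simp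
  have FbP: "Fb = h b" if bP: "b \<in> P"
  proof -
    have "Fb \<le> h b" unfolding Fb_def using I_le[OF bP] b by simp
    moreover have "h b \<le> I" using I_ge[OF bP] b by simp
    moreover have "h b \<le> Fa + d a b" using Fa_ge[OF bP] commute[of b a] by simp
    ultimately show ?thesis unfolding Fb_def by simp
  qed
  define Q where "Q = P \<union> {a, b}"
  define F0 where "F0 x = (if x = a then Fa else if x = b then Fb else h x)" for x
  have F0P: "F0 x = h x" if "x \<in> P" for x
    unfolding F0_def using FaP FbP that ab by auto
  have F0a: "F0 a = Fa" unfolding F0_def by simp
  have F0b: "F0 b = Fb" unfolding F0_def using ab by simp
  have QM: "Q \<subseteq> M" unfolding Q_def using PM a b by blast
  have one: "F0 x - F0 y \<le> d x y" if x: "x \<in> Q" and y: "y \<in> Q" for x y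
  proof -
    have xc: "x \<in> P \<or> x = a \<or> x = b" using x unfolding Q_def by blast
    have yc: "y \<in> P \<or> y = a \<or> y = b" using y unfolding Q_def by blast
    have xM: "x \<in> M" and yM: "y \<in> M" using x y QM by auto
    show ?thesis
    proof (cases "x \<in> P")
      case xP: True
      show ?thesis
      proof (cases "y \<in> P")
        case True then show ?thesis using hle xP F0P by simp
      next
        case False
        then have "y = a \<or> y = b" using yc by blast
        then show ?thesis
        proof
          assume ya: "y = a"
          show ?thesis using Fa_ge[OF xP] F0P[OF xP] F0a ya by simp
        next
          assume yb: "y = b"
          have "h x - I \<le> d x b" using I_ge[OF xP] by simp
          moreover have "h x - Fa - d a b \<le> d x b"
          proof -
            have "h x - Fa \<le> d x a" using Fa_ge[OF xP] by simp
            moreover have "d x a \<le> d x b + d b a" using tri xM a b by blast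
            moreover have "d b a = d a b" by (rule commute)
            ultimately show ?thesis by linarith
          qed
          ultimately have "h x - Fb \<le> d x b" unfolding Fb_def by linarith
          then show ?thesis using F0P[OF xP] F0b yb by simp
        qed
      qed
    next
      case xnP: False
      then have "x = a \<or> x = b" using xc by blast
      then show ?thesis
      proof
        assume xa: "x = a"
        show ?thesis
        proof (cases "y \<in> P")
          case True
          then show ?thesis using Fa_le[OF True] F0P[OF True] F0a xa commute[of a y] by simp
        next
          case False
          then have "y = a \<or> y = b" using yc by blast
          then show ?thesis
          proof
            assume "y = a" then show ?thesis using xa a by simp
          next
            assume yb: "y = b"
            have "Fa \<le> Fb" using Fb_ge g0 dab by (smt (verit) mult_nonneg_nonneg)
            then have "Fa - Fb \<le> d a b" using dab by linarith
            then show ?thesis using xa yb F0a F0b by simp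
          qed
        qed
      next
        assume xb: "x = b"
        show ?thesis
        proof (cases "y \<in> P")
          case True
          have "Fb \<le> h y + d y b" unfolding Fb_def using I_le[OF True] by simp
          then show ?thesis using F0P[OF True] F0b xb commute[of b y] by simp
        next
          case False
          then have "y = a \<or> y = b" using yc by blast
          then show ?thesis
          proof
            assume ya: "y = a"
            show ?thesis using Fb_le xb ya F0a F0b commute[of b a] by simp
          next
            assume "y = b" then show ?thesis using xb b by simp
          qed
        qed
      qed
    qed
  qed
  have QL: "\<forall>x\<in>Q. \<forall>y\<in>Q. \<bar>F0 x - F0 y\<bar> \<le> d x y"
    using one commute by (auto simp: abs_le_iff) (metis commute)
  obtain F where F: "\<forall>x\<in>M. \<forall>y\<in>M. \<bar>F x - F y\<bar> \<le> d x y" "\<forall>x\<in>Q. F x = F0 x"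
    using mcshane[OF QM _ QL] unfolding Q_def by blast
  have "\<forall>x\<in>P. F x = h x" using F(2) F0P unfolding Q_def by auto
  moreover have "\<gamma> * d a b \<le> F b - F a"
    using F(2) F0a F0b Fb_ge unfolding Q_def by auto
  ultimately show ?thesis using F(1) by blast
qed

end



lemma mv_lin: "molecule_val d (\<lambda>x. a * f x + b * g x) = (\<lambda>p. a * molecule_val d f p + b * molecule_val d g p)"
proof
  fix p :: "'a \<times> 'a"
  have e: "a * f (fst p) + b * g (fst p) - (a * f (snd p) + b * g (snd p)) = a * (f (fst p) - f (snd p)) + b * (g (fst p) - g (snd p))"
    by (simp add: algebra_simps)
  show "molecule_val d (\<lambda>x. a * f x + b * g x) p = a * molecule_val d f p + b * molecule_val d g p"
    unfolding molecule_val_def e by (simp add: add_divide_distrib)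
qed

lemma Mtilde_mem: "p \<in> Mtilde M \<longleftrightarrow> fst p \<in> M \<and> snd p \<in> M \<and> fst p \<noteq> snd p"
  unfolding Mtilde_def by (cases p) auto

context Metric_space
begin

lemma dpos: "x \<in> M \<Longrightarrow> y \<in> M \<Longrightarrow> x \<noteq> y \<Longrightarrow> d x y > 0"
  using nonneg[of x y] zero[of x y] by linarith

lemma mv_bound_lip0:
  assumes "f \<in> lip0 M d z" "p \<in> Mtilde M"
  shows "\<bar>molecule_val d f p\<bar> \<le> lipnorm M d f"
proof -
  obtain L where L: "\<forall>x\<in>M. \<forall>y\<in>M. \<bar>f x - f y\<bar> \<le> L * d x y" using lip0_bound[OF assms(1)] by blast
  have p: "fst p \<in> M" "snd p \<in> M" "fst p \<noteq> snd p" using Mtilde_mem[of p M] assms(2) by blast+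
  have "\<bar>f (fst p) - f (snd p)\<bar> \<le> lipnorm M d f * d (fst p) (snd p)" by (rule lip_le[OF L p(1,2)])
  then show ?thesis unfolding molecule_val_def using dpos[OF p] by (simp add: abs_div divide_le_eq)
qed

lemma mv_bound_ball:
  assumes "f \<in> lip0_ball M d z" "p \<in> Mtilde M"
  shows "\<bar>molecule_val d f p\<bar> \<le> 1"
proof -
  have p: "fst p \<in> M" "snd p \<in> M" "fst p \<noteq> snd p" using Mtilde_mem[of p M] assms(2) by blast+
  have "\<bar>f (fst p) - f (snd p)\<bar> \<le> d (fst p) (snd p)" by (rule ball_lip[OF assms(1) p(1,2)])
  then show ?thesis unfolding molecule_val_def using dpos[OF p] by (simp add: abs_div divide_le_eq)
qed

lemma mv_bdd: "f \<in> lip0 M d z \<Longrightarrow> bdd_on (Mtilde M) (molecule_val d f)"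
  unfolding bdd_on_def using mv_bound_lip0 by blast

lemma lip0_lin:
  assumes "f \<in> lip0 M d z" "g \<in> lip0 M d z"
  shows "(\<lambda>x. a * f x + b * g x) \<in> lip0 M d z"
proof -
  obtain L1 where L1: "\<forall>x\<in>M. \<forall>y\<in>M. \<bar>f x - f y\<bar> \<le> L1 * d x y" using lip0_bound[OF assms(1)] by blast
  obtain L2 where L2: "\<forall>x\<in>M. \<forall>y\<in>M. \<bar>g x - g y\<bar> \<le> L2 * d x y" using lip0_bound[OF assms(2)] by blast
  have "\<forall>x\<in>M. \<forall>y\<in>M. \<bar>(a * f x + b * g x) - (a * f y + b * g y)\<bar> \<le> (\<bar>a\<bar> * L1 + \<bar>b\<bar> * L2) * d x y"
  proof (intro ballI)
    fix x y assume x: "x \<in> M" and y: "y \<in> M"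
    have "\<bar>(a * f x + b * g x) - (a * f y + b * g y)\<bar> = \<bar>a * (f x - f y) + b * (g x - g y)\<bar>"
      by (simp add: algebra_simps)
    also have "\<dots> \<le> \<bar>a * (f x - f y)\<bar> + \<bar>b * (g x - g y)\<bar>" by (rule abs_triangle_ineq)
    also have "\<dots> = \<bar>a\<bar> * \<bar>f x - f y\<bar> + \<bar>b\<bar> * \<bar>g x - g y\<bar>" by (simp add: abs_mult)
    also have "\<dots> \<le> \<bar>a\<bar> * (L1 * d x y) + \<bar>b\<bar> * (L2 * d x y)"
      using L1 L2 x y by (intro add_mono mult_left_mono) auto
    also have "\<dots> = (\<bar>a\<bar> * L1 + \<bar>b\<bar> * L2) * d x y" by (simp add: algebra_simps)
    finally show "\<bar>(a * f x + b * g x) - (a * f y + b * g y)\<bar> \<le> (\<bar>a\<bar> * L1 + \<bar>b\<bar> * L2) * d x y" .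
  qed
  then show ?thesis using assms unfolding lip0_def by auto
qed

lemma zero_lip0: "(\<lambda>x. 0) \<in> lip0 M d z"
  unfolding lip0_def by (auto intro!: exI[of _ 0])

lemma zero_ball: "(\<lambda>x. 0) \<in> lip0_ball M d z"
  by (rule ball_intro) auto

lemma mv_inj: "z \<in> M \<Longrightarrow> inj_on (molecule_val d) (lip0 M d z)"
proof (rule inj_onI)
  fix f g assume zM: "z \<in> M" and f: "f \<in> lip0 M d z" and g: "g \<in> lip0 M d z" and eq: "molecule_val d f = molecule_val d g"
  show "f = g"
  proof
    fix x
    show "f x = g x"
    proof (cases "x \<in> M \<and> x \<noteq> z")
      case True
      have "molecule_val d f (x, z) = molecule_val d g (x, z)" using eq by simp
      moreover have "f z = 0" "g z = 0" using f g unfolding lip0_def by auto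
      ultimately show ?thesis unfolding molecule_val_def using dpos[of x z] True zM by auto
    next
      case False
      then show ?thesis using f g unfolding lip0_def by auto
    qed
  qed
qed

end

context pba
begin

lemma ba_norm_pos: "ba_norm T \<mu> = \<mu> T"
proof -
  have "{(\<Sum>B\<in>P. \<bar>\<mu> B\<bar>) | P. finite P \<and> \<Union>P = T \<and> (\<forall>B\<in>P. \<forall>C\<in>P. B \<noteq> C \<longrightarrow> B \<inter> C = {})} = {\<mu> T}"
  proof
    show "{\<mu> T} \<subseteq> {(\<Sum>B\<in>P. \<bar>\<mu> B\<bar>) | P. finite P \<and> \<Union>P = T \<and> (\<forall>B\<in>P. \<forall>C\<in>P. B \<noteq> C \<longrightarrow> B \<inter> C = {})}"
    proof -
      have e: "\<mu> T = (\<Sum>B\<in>{T}. \<bar>\<mu> B\<bar>)" using muT by simp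
      have "\<mu> T \<in> {(\<Sum>B\<in>P. \<bar>\<mu> B\<bar>) | P. finite P \<and> \<Union>P = T \<and> (\<forall>B\<in>P. \<forall>C\<in>P. B \<noteq> C \<longrightarrow> B \<inter> C = {})}"
        unfolding mem_Collect_eq by (rule exI[of _ "{T}"]) (use e in simp)
      then show ?thesis by simp
    qed
    show "{(\<Sum>B\<in>P. \<bar>\<mu> B\<bar>) | P. finite P \<and> \<Union>P = T \<and> (\<forall>B\<in>P. \<forall>C\<in>P. B \<noteq> C \<longrightarrow> B \<inter> C = {})} \<subseteq> {\<mu> T}"
    proof
      fix s assume "s \<in> {(\<Sum>B\<in>P. \<bar>\<mu> B\<bar>) | P. finite P \<and> \<Union>P = T \<and> (\<forall>B\<in>P. \<forall>C\<in>P. B \<noteq> C \<longrightarrow> B \<inter> C = {})}"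
      then obtain P where P: "s = (\<Sum>B\<in>P. \<bar>\<mu> B\<bar>)" "finite P" "\<Union>P = T" "\<forall>B\<in>P. \<forall>C\<in>P. B \<noteq> C \<longrightarrow> B \<inter> C = {}"
        by blast
      have sub: "\<forall>B\<in>P. B \<subseteq> T" using P(3) by blast
      have "s = (\<Sum>B\<in>P. \<mu> B)" unfolding P(1) by (rule sum.cong) (use sub nonneg in auto)
      also have "\<dots> = \<mu> (\<Union>B\<in>P. B)" by (rule fadd_UN[symmetric]) (use P sub in auto)
      also have "(\<Union>B\<in>P. B) = T" using P(3) by simp
      finally show "s \<in> {\<mu> T}" by simp
    qed
  qed
  then show ?thesis unfolding ba_norm_def by simp
qed

end

lemma phi_dual:
  assumes ms: "Metric_space M d" and ba: "is_ba (Mtilde M) \<mu>" and pos: "positive_ba (Mtilde M) \<mu>"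
    and one: "\<mu> (Mtilde M) = 1"
  shows "lip0_dual M d z (Phi_star M d \<mu>)"
proof -
  interpret Metric_space M d by (rule ms)
  interpret pba "Mtilde M" \<mu> by unfold_locales (rule ba, rule pos)
  have lin: "\<forall>f\<in>lip0 M d z. \<forall>g\<in>lip0 M d z. \<forall>a b. Phi_star M d \<mu> (\<lambda>x. a * f x + b * g x) = a * Phi_star M d \<mu> f + b * Phi_star M d \<mu> g"
  proof (intro ballI allI)
    fix f g a b assume f: "f \<in> lip0 M d z" and g: "g \<in> lip0 M d z"
    show "Phi_star M d \<mu> (\<lambda>x. a * f x + b * g x) = a * Phi_star M d \<mu> f + b * Phi_star M d \<mu> g"
      unfolding Phi_star_def mv_lin by (rule fa_lin[OF mv_bdd[OF f] mv_bdd[OF g]])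
  qed
  have "\<forall>f\<in>lip0 M d z. \<bar>Phi_star M d \<mu> f\<bar> \<le> 1 * lipnorm M d f"
  proof
    fix f assume f: "f \<in> lip0 M d z"
    have "\<bar>fa_integral (Mtilde M) \<mu> (molecule_val d f)\<bar> \<le> lipnorm M d f * \<mu> (Mtilde M)"
      by (rule fa_bound) (use mv_bound_lip0[OF f] in blast)
    then show "\<bar>Phi_star M d \<mu> f\<bar> \<le> 1 * lipnorm M d f" unfolding Phi_star_def using one by simp
  qed
  then show ?thesis unfolding lip0_dual_def using lin by blast
qed



lemma bdd_above_on: "bdd_on T h \<Longrightarrow> bdd_above (h ` T)"
  unfolding bdd_on_def bdd_above_def by (auto simp: abs_le_iff) 

lemma dual_lin:
  assumes "lip0_dual M d z \<phi>" "f \<in> lip0 M d z" "g \<in> lip0 M d z"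
  shows "\<phi> (\<lambda>x. a * f x + b * g x) = a * \<phi> f + b * \<phi> g"
  using assms unfolding lip0_dual_def by blast

lemma dual_scale:
  assumes "lip0_dual M d z \<phi>" "f \<in> lip0 M d z"
  shows "\<phi> (\<lambda>x. c * f x) = c * \<phi> f"
  using dual_lin[OF assms assms(2), of c 0] by simp

lemma phi_le_lipnorm:
  assumes ms: "Metric_space M d" and zM: "z \<in> M" and du: "lip0_dual M d z \<phi>" and n1: "dual_norm M d z \<phi> = 1"
    and f: "f \<in> lip0 M d z"
  shows "\<phi> f \<le> lipnorm M d f"
proof -
  interpret Metric_space M d by (rule ms)
  obtain C where C: "\<forall>f\<in>lip0 M d z. \<bar>\<phi> f\<bar> \<le> C * lipnorm M d f" using du unfolding lip0_dual_def by blast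
  have bdd: "bdd_above ((\<lambda>f. \<bar>\<phi> f\<bar>) ` lip0_ball M d z)"
  proof -
    have "\<forall>g\<in>lip0_ball M d z. \<bar>\<phi> g\<bar> \<le> \<bar>C\<bar>"
    proof
      fix g assume g: "g \<in> lip0_ball M d z"
      then have g0: "g \<in> lip0 M d z" and g1: "lipnorm M d g \<le> 1" unfolding lip0_ball_def by auto
      obtain L where L: "\<forall>x\<in>M. \<forall>y\<in>M. \<bar>g x - g y\<bar> \<le> L * d x y" using lip0_bound[OF g0] by blast
      have l0: "0 \<le> lipnorm M d g" by (rule lipnorm_nonneg[OF L])
      have "\<bar>\<phi> g\<bar> \<le> C * lipnorm M d g" using C g0 by blast
      also have "\<dots> \<le> \<bar>C\<bar> * lipnorm M d g" using l0 by (intro mult_right_mono) auto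
      also have "\<dots> \<le> \<bar>C\<bar> * 1" using g1 by (intro mult_left_mono) auto
      finally show "\<bar>\<phi> g\<bar> \<le> \<bar>C\<bar>" by simp
    qed
    then show ?thesis unfolding bdd_above_def by blast
  qed
  have ball_le: "\<bar>\<phi> g\<bar> \<le> 1" if "g \<in> lip0_ball M d z" for g
  proof -
    have "\<bar>\<phi> g\<bar> \<le> dual_norm M d z \<phi>" unfolding dual_norm_def by (rule cSup_upper[OF _ bdd]) (use that in blast)
    then show ?thesis using n1 by simp
  qed
  obtain L where L: "\<forall>x\<in>M. \<forall>y\<in>M. \<bar>f x - f y\<bar> \<le> L * d x y" using lip0_bound[OF f] by blast
  have l0: "0 \<le> lipnorm M d f" by (rule lipnorm_nonneg[OF L])
  have fz: "f z = 0" and fout: "\<forall>x. x \<notin> M \<longrightarrow> f x = 0" using f unfolding lip0_def by auto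
  show ?thesis
  proof (cases "lipnorm M d f = 0")
    case True
    have "f = (\<lambda>x. 0 * f x)"
    proof
      fix x show "f x = 0 * f x"
      proof (cases "x \<in> M")
        case True
        have "\<bar>f x - f z\<bar> \<le> lipnorm M d f * d x z" by (rule lip_le[OF L True zM])
        then show ?thesis using \<open>lipnorm M d f = 0\<close> fz by simp
      next
        case False then show ?thesis using fout by simp
      qed
    qed
    then have "\<phi> f = 0 * \<phi> f" using dual_scale[OF du f, of 0] by simp
    then show ?thesis using True by simp
  next
    case False
    then have lp: "lipnorm M d f > 0" using l0 by simp
    define g where "g = (\<lambda>x. (1 / lipnorm M d f) * f x)"
    have "g \<in> lip0_ball M d z"
    proof (rule ball_intro)
      show "g z = 0" unfolding g_def using fz by simp
      show "\<forall>x. x \<notin> M \<longrightarrow> g x = 0" unfolding g_def using fout by simp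
      show "\<forall>x\<in>M. \<forall>y\<in>M. \<bar>g x - g y\<bar> \<le> d x y"
      proof (intro ballI)
        fix x y assume x: "x \<in> M" and y: "y \<in> M"
        have "\<bar>f x - f y\<bar> \<le> lipnorm M d f * d x y" by (rule lip_le[OF L x y])
        moreover have "\<bar>g x - g y\<bar> = \<bar>f x - f y\<bar> / lipnorm M d f"
          unfolding g_def using lp by (simp add: diff_divide_distrib[symmetric] abs_div)
        ultimately show "\<bar>g x - g y\<bar> \<le> d x y" using lp by (simp add: divide_le_eq mult.commute)
      qed
    qed
    then have "\<bar>\<phi> g\<bar> \<le> 1" by (rule ball_le)
    moreover have "\<phi> g = (1 / lipnorm M d f) * \<phi> f" unfolding g_def by (rule dual_scale[OF du f])
    ultimately have A: "\<phi> g \<le> 1" and B: "\<phi> g = (1 / lipnorm M d f) * \<phi> f" by (simp_all only: abs_le_iff)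
    then have "(1 / lipnorm M d f) * \<phi> f \<le> 1" by linarith
    then show ?thesis using lp by (simp add: field_simps)
  qed
qed

lemma lipnorm_le_sup:
  assumes ms: "Metric_space M d" and Tne: "Mtilde M \<noteq> {}" and f: "f \<in> lip0 M d z"
  shows "lipnorm M d f \<le> Sup (molecule_val d f ` Mtilde M)"
proof -
  interpret Metric_space M d by (rule ms)
  let ?S = "Sup (molecule_val d f ` Mtilde M)"
  have bdd: "bdd_above (molecule_val d f ` Mtilde M)" by (rule bdd_above_on[OF mv_bdd[OF f]])
  have up: "molecule_val d f p \<le> ?S" if "p \<in> Mtilde M" for p
    by (rule cSup_upper[OF _ bdd]) (use that in blast)
  obtain p where p: "p \<in> Mtilde M" using Tne by blast
  have p': "(snd p, fst p) \<in> Mtilde M" using p Mtilde_mem[of p M] Mtilde_mem[of "(snd p, fst p)" M] by auto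
  have "molecule_val d f (snd p, fst p) = - molecule_val d f p"
    unfolding molecule_val_def using commute[of "fst p" "snd p"] by (simp add: minus_divide_left)
  then have S0: "0 \<le> ?S" using up[OF p] up[OF p'] by linarith
  show ?thesis
  proof (rule lipnorm_le[OF S0])
    show "\<forall>x\<in>M. \<forall>y\<in>M. \<bar>f x - f y\<bar> \<le> ?S * d x y"
    proof (intro ballI)
      fix x y assume x: "x \<in> M" and y: "y \<in> M"
      show "\<bar>f x - f y\<bar> \<le> ?S * d x y"
      proof (cases "x = y")
        case True then show ?thesis using y by simp
      next
        case False
        have dp: "d x y > 0" by (rule dpos[OF x y False])
        have "(x, y) \<in> Mtilde M" "(y, x) \<in> Mtilde M" using x y False unfolding Mtilde_def by auto
        then have "(f x - f y) / d x y \<le> ?S" "(f y - f x) / d y x \<le> ?S"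
          using up unfolding molecule_val_def by force+
        then have "f x - f y \<le> ?S * d x y" "f y - f x \<le> ?S * d x y"
          using dp commute[of y x] by (simp_all add: divide_le_eq)
        then show ?thesis by (simp add: abs_le_iff)
      qed
    qed
  qed
qed

lemma represent:
  assumes ms: "Metric_space M d" and zM: "z \<in> M" and Tne: "Mtilde M \<noteq> {}"
    and du: "lip0_dual M d z \<phi>" and n1: "dual_norm M d z \<phi> = 1"
  shows "\<exists>\<mu>. is_ba (Mtilde M) \<mu> \<and> positive_ba (Mtilde M) \<mu> \<and> \<mu> (Mtilde M) = 1 \<and>
             (\<forall>f\<in>lip0 M d z. Phi_star M d \<mu> f = \<phi> f)"
proof -
  interpret Metric_space M d by (rule ms)
  define T where "T = Mtilde M"
  have Tne': "T \<noteq> {}" using Tne unfolding T_def .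
  define V where "V = {h. bdd_on T h}"
  define p where "p h = Sup (h ` T)" for h :: "'a \<times> 'a \<Rightarrow> real"
  define W where "W = (molecule_val d) ` (lip0 M d z)"
  define g where "g w = \<phi> (inv_into (lip0 M d z) (molecule_val d) w)" for w
  have inj: "inj_on (molecule_val d) (lip0 M d z)" by (rule mv_inj[OF zM])
  have gmv: "g (molecule_val d f) = \<phi> f" if "f \<in> lip0 M d z" for f
    unfolding g_def using inv_into_f_f[OF inj that] by simp
  have Vcl: "\<And>x y s t. x \<in> V \<Longrightarrow> y \<in> V \<Longrightarrow> (\<lambda>q. s * x q + t * y q) \<in> V"
    unfolding V_def using bdd_lin by blast
  have psub: "p (\<lambda>q. x q + y q) \<le> p x + p y" if "x \<in> V" "y \<in> V" for x y
    unfolding p_def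
  proof (rule cSup_least)
    show "(\<lambda>q. x q + y q) ` T \<noteq> {}" using Tne' by blast
    fix s assume "s \<in> (\<lambda>q. x q + y q) ` T"
    then obtain q where q: "q \<in> T" "s = x q + y q" by blast
    have "x q \<le> Sup (x ` T)" by (rule cSup_upper) (use q that bdd_above_on in \<open>auto simp: V_def\<close>)
    moreover have "y q \<le> Sup (y ` T)" by (rule cSup_upper) (use q that bdd_above_on in \<open>auto simp: V_def\<close>)
    ultimately show "s \<le> Sup (x ` T) + Sup (y ` T)" using q by simp
  qed
  have phom: "p (\<lambda>q. c * x q) = c * p x" if xV: "x \<in> V" and c: "c > 0" for x c
  proof -
    have bx: "bdd_above (x ` T)" using bdd_above_on[of T x] xV unfolding V_def by simp
    have cxV: "(\<lambda>q. c * x q) \<in> V" using Vcl[OF xV xV, of c 0] by simp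
    have bcx: "bdd_above ((\<lambda>q. c * x q) ` T)" using bdd_above_on[of T "\<lambda>q. c * x q"] cxV unfolding V_def by simp
    have a: "Sup ((\<lambda>q. c * x q) ` T) \<le> c * Sup (x ` T)"
    proof (rule cSup_least)
      show "(\<lambda>q. c * x q) ` T \<noteq> {}" using Tne' by blast
      fix s assume "s \<in> (\<lambda>q. c * x q) ` T"
      then obtain q where q: "q \<in> T" "s = c * x q" by blast
      have "x q \<le> Sup (x ` T)" by (rule cSup_upper[OF _ bx]) (use q in blast)
      then show "s \<le> c * Sup (x ` T)" using q c by simp
    qed
    have b: "Sup (x ` T) \<le> (1 / c) * Sup ((\<lambda>q. c * x q) ` T)"
    proof (rule cSup_least)
      show "x ` T \<noteq> {}" using Tne' by blast
      fix s assume "s \<in> x ` T"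
      then obtain q where q: "q \<in> T" "s = x q" by blast
      have "c * x q \<le> Sup ((\<lambda>q. c * x q) ` T)" by (rule cSup_upper[OF _ bcx]) (use q in blast)
      then show "s \<le> (1 / c) * Sup ((\<lambda>q. c * x q) ` T)" using q c by (simp add: field_simps)
    qed
    have "c * Sup (x ` T) \<le> Sup ((\<lambda>q. c * x q) ` T)" using b c by (simp add: field_simps)
    with a show ?thesis unfolding p_def by simp
  qed
  have WV: "W \<subseteq> V" unfolding W_def V_def T_def using mv_bdd by blast
  have Wcl: "\<And>x y s t. x \<in> W \<Longrightarrow> y \<in> W \<Longrightarrow> (\<lambda>q. s * x q + t * y q) \<in> W"
  proof -
    fix x y s t assume "x \<in> W" "y \<in> W"
    then obtain f1 f2 where f: "f1 \<in> lip0 M d z" "x = molecule_val d f1" "f2 \<in> lip0 M d z" "y = molecule_val d f2"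
      unfolding W_def by blast
    have "(\<lambda>q. s * x q + t * y q) = molecule_val d (\<lambda>x. s * f1 x + t * f2 x)" using f by (simp add: mv_lin)
    then show "(\<lambda>q. s * x q + t * y q) \<in> W" unfolding W_def using lip0_lin[OF f(1) f(3)] by blast
  qed
  have Wne: "W \<noteq> {}" unfolding W_def using zero_lip0 by blast
  have glin: "\<And>x y s t. x \<in> W \<Longrightarrow> y \<in> W \<Longrightarrow> g (\<lambda>q. s * x q + t * y q) = s * g x + t * g y"
  proof -
    fix x y s t assume "x \<in> W" "y \<in> W"
    then obtain f1 f2 where f: "f1 \<in> lip0 M d z" "x = molecule_val d f1" "f2 \<in> lip0 M d z" "y = molecule_val d f2"
      unfolding W_def by blast
    have "(\<lambda>q. s * x q + t * y q) = molecule_val d (\<lambda>x. s * f1 x + t * f2 x)" using f by (simp add: mv_lin)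
    then have "g (\<lambda>q. s * x q + t * y q) = \<phi> (\<lambda>x. s * f1 x + t * f2 x)" using gmv lip0_lin[OF f(1) f(3)] by simp
    also have "\<dots> = s * \<phi> f1 + t * \<phi> f2" by (rule dual_lin[OF du f(1) f(3)])
    finally show "g (\<lambda>q. s * x q + t * y q) = s * g x + t * g y" using f gmv by simp
  qed
  have gdom: "\<And>x. x \<in> W \<Longrightarrow> g x \<le> p x"
  proof -
    fix x assume "x \<in> W"
    then obtain f where f: "f \<in> lip0 M d z" "x = molecule_val d f" unfolding W_def by blast
    have "\<phi> f \<le> lipnorm M d f" by (rule phi_le_lipnorm[OF ms zM du n1 f(1)])
    also have "\<dots> \<le> p x" unfolding p_def T_def f(2) by (rule lipnorm_le_sup[OF ms Tne f(1)])
    finally show "g x \<le> p x" using gmv f by simp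
  qed
  obtain \<psi> where lin: "\<forall>x\<in>V. \<forall>y\<in>V. \<forall>s t. \<psi> (\<lambda>q. s * x q + t * y q) = s * \<psi> x + t * \<psi> y"
    and dom: "\<forall>x\<in>V. \<psi> x \<le> p x" and ext: "\<forall>x\<in>W. \<psi> x = g x"
    using HB[of V p W g, OF Vcl psub phom WV Wcl Wne glin gdom] by blast
  have Vscale: "(\<lambda>q. s * h q) \<in> V" if "h \<in> V" for h s using Vcl[OF that that, of s 0] by simp
  have pscale: "\<psi> (\<lambda>q. s * h q) = s * \<psi> h" if "h \<in> V" for h s
  proof -
    have "\<psi> (\<lambda>q. s * h q + 0 * h q) = s * \<psi> h + 0 * \<psi> h" using lin that by blast
    then show ?thesis by simp
  qed
  have psi_ub: "\<psi> h \<le> c" if "h \<in> V" "\<forall>q\<in>T. h q \<le> c" for h c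
  proof -
    have "p h \<le> c" unfolding p_def by (rule cSup_least) (use Tne' that in auto)
    moreover have "\<psi> h \<le> p h" using dom that(1) by blast
    ultimately show ?thesis by linarith
  qed
  have psi_lb: "c \<le> \<psi> h" if hV: "h \<in> V" and hc: "\<forall>q\<in>T. c \<le> h q" for h c
  proof -
    have "\<psi> (\<lambda>q. (-1) * h q) \<le> - c" by (rule psi_ub[OF Vscale[OF hV]]) (use hc in auto)
    then show ?thesis using pscale[OF hV, of "-1"] by simp
  qed
  have psi_eq: "\<psi> h = \<psi> h'" if hV: "h \<in> V" and h'V: "h' \<in> V" and eq: "\<forall>q\<in>T. h q = h' q" for h h'
  proof -
    have dV: "(\<lambda>q. 1 * h q + (-1) * h' q) \<in> V" by (rule Vcl[OF hV h'V])
    have "\<psi> (\<lambda>q. 1 * h q + (-1) * h' q) = 1 * \<psi> h + (-1) * \<psi> h'" using lin hV h'V by blast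
    then have "\<psi> (\<lambda>q. 1 * h q + (-1) * h' q) = \<psi> h - \<psi> h'" by simp
    moreover have "\<psi> (\<lambda>q. 1 * h q + (-1) * h' q) \<le> 0" by (rule psi_ub[OF dV]) (use eq in auto)
    moreover have "0 \<le> \<psi> (\<lambda>q. 1 * h q + (-1) * h' q)" by (rule psi_lb[OF dV]) (use eq in auto)
    ultimately show ?thesis by simp
  qed
  have indV: "ind A \<in> V" for A unfolding V_def using bdd_ind by blast
  define \<mu> where "\<mu> A = \<psi> (ind A)" for A
  have mu01: "0 \<le> \<mu> A" "\<mu> A \<le> 1" for A
    unfolding \<mu>_def by (rule psi_lb[OF indV], simp add: ind_def, rule psi_ub[OF indV], simp add: ind_def)
  have muT1: "\<mu> T = 1"
  proof -
    have "\<mu> T \<le> 1" by (rule mu01)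
    moreover have "1 \<le> \<mu> T" unfolding \<mu>_def by (rule psi_lb[OF indV]) (simp add: ind_def)
    ultimately show ?thesis by simp
  qed
  have isba: "is_ba T \<mu>"
    unfolding is_ba_def
  proof (intro conjI allI impI)
    fix A B assume AB: "A \<subseteq> T \<and> B \<subseteq> T \<and> A \<inter> B = {}"
    have "ind (A \<union> B) = (\<lambda>q. 1 * ind A q + 1 * ind B q)"
    proof
      fix q show "ind (A \<union> B) q = 1 * ind A q + 1 * ind B q" using AB unfolding ind_def by auto
    qed
    moreover have "\<psi> (\<lambda>q. 1 * ind A q + 1 * ind B q) = 1 * \<psi> (ind A) + 1 * \<psi> (ind B)" using lin indV by blast
    ultimately show "\<mu> (A \<union> B) = \<mu> A + \<mu> B" unfolding \<mu>_def by simp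
  next
    show "\<exists>C. \<forall>A. A \<subseteq> T \<longrightarrow> \<bar>\<mu> A\<bar> \<le> C" using mu01 by (intro exI[of _ 1]) (simp add: abs_le_iff)
  qed
  have ispos: "positive_ba T \<mu>" unfolding positive_ba_def using mu01 by simp
  interpret pba T \<mu> by unfold_locales (rule isba, rule ispos)
  have psum: "(\<lambda>q. \<Sum>c\<in>F. w c * u c q) \<in> V \<and> \<psi> (\<lambda>q. \<Sum>c\<in>F. w c * u c q) = (\<Sum>c\<in>F. w c * \<psi> (u c))"
    if "finite F" "\<forall>c\<in>F. u c \<in> V" for F :: "real set" and w u
    using that
  proof (induction F rule: finite_induct)
    case empty
    have zV: "(\<lambda>q. 0) \<in> V" unfolding V_def using bdd_const by blast
    have "\<psi> (\<lambda>q. 0 * (0::real)) = 0 * \<psi> (\<lambda>q. 0)" by (rule pscale[OF zV])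
    then show ?case using zV by simp
  next
    case (insert c F)
    then have IH: "(\<lambda>q. \<Sum>c\<in>F. w c * u c q) \<in> V" "\<psi> (\<lambda>q. \<Sum>c\<in>F. w c * u c q) = (\<Sum>c\<in>F. w c * \<psi> (u c))"
      and uc: "u c \<in> V" by auto
    have e: "(\<lambda>q. \<Sum>c\<in>insert c F. w c * u c q) = (\<lambda>q. w c * u c q + 1 * (\<lambda>q. \<Sum>c\<in>F. w c * u c q) q)"
      using insert by simp
    note l = lin[rule_format, OF uc IH(1), of "w c" 1]
    show ?case unfolding e using Vcl[OF uc IH(1), of "w c" 1] l IH(2) insert by simp
  qed
  have fint_psi: "fint T \<mu> s = \<psi> s" if sV: "s \<in> V" and fs: "finite (s ` T)" for s
  proof -
    have uV: "\<forall>c\<in>s ` T. ind {p\<in>T. s p = c} \<in> V" using indV by blast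
    have "fint T \<mu> s = (\<Sum>c\<in>s ` T. c * \<psi> (ind {p\<in>T. s p = c}))" unfolding fint_def \<mu>_def by simp
    also have "\<dots> = \<psi> (\<lambda>q. \<Sum>c\<in>s ` T. c * ind {p\<in>T. s p = c} q)"
      using psum[OF fs uV, of "\<lambda>c. c"] by simp
    also have "\<dots> = \<psi> s"
    proof (rule psi_eq)
      show "(\<lambda>q. \<Sum>c\<in>s ` T. c * ind {p\<in>T. s p = c} q) \<in> V" using psum[OF fs uV, of "\<lambda>c. c"] by simp
      show "s \<in> V" by (rule sV)
      show "\<forall>q\<in>T. (\<Sum>c\<in>s ` T. c * ind {p\<in>T. s p = c} q) = s q"
      proof
        fix q assume q: "q \<in> T"
        have "(\<Sum>c\<in>s ` T. c * ind {p\<in>T. s p = c} q) = (\<Sum>c\<in>s ` T. if s q = c then c else 0)"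
          by (rule sum.cong) (use q in \<open>auto simp: ind_def\<close>)
        also have "\<dots> = s q" using fs q by (simp add: sum.delta)
        finally show "(\<Sum>c\<in>s ` T. c * ind {p\<in>T. s p = c} q) = s q" .
      qed
    qed
    finally show ?thesis .
  qed
  have fa_psi0: "fa_integral T \<mu> h - \<psi> h = 0" if hV: "h \<in> V" for h
  proof (rule small0[of _ 2])
    fix k
    have hb: "bdd_on T h" using hV unfolding V_def by simp
    have skV: "skf k h \<in> V"
    proof -
      obtain C where C: "\<forall>q\<in>T. \<bar>h q\<bar> \<le> C" using hb unfolding bdd_on_def by blast
      have "\<forall>q\<in>T. \<bar>skf k h q\<bar> \<le> C + 1"
      proof
        fix q assume "q \<in> T"
        then have "\<bar>h q\<bar> \<le> C" using C by blast
        moreover have "\<bar>h q - skf k h q\<bar> \<le> 1 / real (Suc k)" using skf_approx[of h k] \<open>q \<in> T\<close> by blast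
        moreover have "1 / real (Suc k) \<le> 1" by simp
        ultimately show "\<bar>skf k h q\<bar> \<le> C + 1" by (simp only: abs_le_iff) linarith
      qed
      then show ?thesis unfolding V_def bdd_on_def by blast
    qed
    have a: "\<bar>fa_integral T \<mu> h - fint T \<mu> (skf k h)\<bar> \<le> 1 / real (Suc k) * \<mu> T"
      by (rule approx[OF hb fin_skf2[OF hb] skf_approx])
    have b: "fint T \<mu> (skf k h) = \<psi> (skf k h)" by (rule fint_psi[OF skV fin_skf2[OF hb]])
    have dV: "(\<lambda>q. 1 * h q + (-1) * skf k h q) \<in> V" by (rule Vcl[OF hV skV])
    have "\<psi> (\<lambda>q. 1 * h q + (-1) * skf k h q) = 1 * \<psi> h + (-1) * \<psi> (skf k h)" using lin hV skV by blast
    then have dpsi: "\<psi> (\<lambda>q. 1 * h q + (-1) * skf k h q) = \<psi> h - \<psi> (skf k h)" by simp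
    have c1: "\<psi> (\<lambda>q. 1 * h q + (-1) * skf k h q) \<le> 1 / real (Suc k)"
      by (rule psi_ub[OF dV]) (use skf_approx[of h k] in \<open>auto simp: abs_le_iff\<close>)
    have c2: "0 \<le> \<psi> (\<lambda>q. 1 * h q + (-1) * skf k h q)"
      by (rule psi_lb[OF dV]) (use skf_le[of k h] in auto)
    have a': "\<bar>fa_integral T \<mu> h - fint T \<mu> (skf k h)\<bar> \<le> 1 / real (Suc k)" using a muT1 by simp
    have two: "2 / real (Suc k) = 1 / real (Suc k) + 1 / real (Suc k)" by (simp add: field_simps)
    show "\<bar>fa_integral T \<mu> h - \<psi> h\<bar> \<le> 2 / real (Suc k)"
      using a' b c1 c2 dpsi two unfolding abs_le_iff by linarith
  qed
  have fa_psi: "fa_integral T \<mu> h = \<psi> h" if "h \<in> V" for h using fa_psi0[OF that] by simp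
  have "\<forall>f\<in>lip0 M d z. Phi_star M d \<mu> f = \<phi> f"
  proof
    fix f assume f: "f \<in> lip0 M d z"
    have mW: "molecule_val d f \<in> W" unfolding W_def using f by blast
    have "Phi_star M d \<mu> f = fa_integral T \<mu> (molecule_val d f)" unfolding Phi_star_def T_def ..
    also have "\<dots> = \<psi> (molecule_val d f)" using fa_psi WV mW by blast
    also have "\<dots> = g (molecule_val d f)" using ext mW by blast
    also have "\<dots> = \<phi> f" by (rule gmv[OF f])
    finally show "Phi_star M d \<mu> f = \<phi> f" .
  qed
  then show ?thesis using isba ispos muT1 unfolding T_def by blast
qed



lemma sum_comb:
  fixes l A B C E :: "nat \<Rightarrow> real"
  shows "(\<Sum>i<n. l i * A i) - (\<Sum>i<n. l i * B i) - ((\<Sum>i<n. l i * C i) - (\<Sum>i<n. l i * E i))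
         = (\<Sum>i<n. l i * ((A i - C i) + (E i - B i)))"
  by (simp add: sum_subtractf[symmetric] sum.distrib[symmetric] algebra_simps)

lemma avg_lemma:
  fixes a :: "nat \<Rightarrow> real" and D \<gamma> :: real
  assumes n: "1 \<le> n" and le: "\<forall>i<n. a i \<le> 2 * D" and gt: "(\<Sum>i<n. (1 / real n) * a i) > (2 - (1 - \<gamma>) / real n) * D"
    and i: "i < n"
  shows "a i > (1 + \<gamma>) * D"
proof -
  have np: "real n > 0" using n by simp
  have "(\<Sum>i<n. (1 / real n) * a i) = (1 / real n) * (\<Sum>i<n. a i)" by (simp add: sum_distrib_left)
  then have "(1 / real n) * (\<Sum>i<n. a i) > (2 - (1 - \<gamma>) / real n) * D" using gt by simp
  then have "real n * ((1 / real n) * (\<Sum>i<n. a i)) > real n * ((2 - (1 - \<gamma>) / real n) * D)"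
    using mult_strict_left_mono np by blast
  moreover have "real n * ((1 / real n) * (\<Sum>i<n. a i)) = (\<Sum>i<n. a i)" using np by simp
  moreover have "real n * ((2 - (1 - \<gamma>) / real n) * D) = (2 * real n - (1 - \<gamma>)) * D" using np by (simp add: field_simps)
  ultimately have S: "(\<Sum>i<n. a i) > (2 * real n - (1 - \<gamma>)) * D" by simp
  have "(\<Sum>j<n. a j) = a i + (\<Sum>j\<in>{..<n} - {i}. a j)" using i by (simp add: sum.remove)
  moreover have "(\<Sum>j\<in>{..<n} - {i}. a j) \<le> real (card ({..<n} - {i})) * (2 * D)"
    by (rule sum_bounded_above) (use le in auto)
  moreover have "real (card ({..<n} - {i})) = real n - 1" using i n by (simp add: of_nat_diff)
  ultimately have "(\<Sum>j<n. a j) \<le> a i + (real n - 1) * (2 * D)" by simp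
  with S show ?thesis by (simp add: algebra_simps)
qed

lemma slice_ne:
  assumes ms: "Metric_space M d" and du: "lip0_dual M d z \<phi>" and n1: "dual_norm M d z \<phi> = 1" and a: "\<alpha> > 0"
  shows "\<exists>f. f \<in> slice M d z \<phi> \<alpha>"
proof -
  interpret Metric_space M d by (rule ms)
  have "1 - \<alpha> < Sup ((\<lambda>f. \<bar>\<phi> f\<bar>) ` lip0_ball M d z)" using n1 a unfolding dual_norm_def by simp
  moreover have "(\<lambda>f. \<bar>\<phi> f\<bar>) ` lip0_ball M d z \<noteq> {}" using zero_ball by blast
  ultimately obtain s where "s \<in> (\<lambda>f. \<bar>\<phi> f\<bar>) ` lip0_ball M d z" "1 - \<alpha> < s" by (rule less_cSupE)
  then obtain f where f: "f \<in> lip0_ball M d z" "1 - \<alpha> < \<bar>\<phi> f\<bar>" by blast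
  have f0: "f \<in> lip0 M d z" using f unfolding lip0_ball_def by blast
  show ?thesis
  proof (cases "\<phi> f \<ge> 0")
    case True
    then have "f \<in> slice M d z \<phi> \<alpha>" using f unfolding slice_def by simp
    then show ?thesis by blast
  next
    case False
    define g where "g = (\<lambda>x. (-1) * f x)"
    have "g \<in> lip0_ball M d z"
    proof (rule ball_intro)
      show "g z = 0" "\<forall>x. x \<notin> M \<longrightarrow> g x = 0" using f0 unfolding g_def lip0_def by auto
      show "\<forall>x\<in>M. \<forall>y\<in>M. \<bar>g x - g y\<bar> \<le> d x y"
        using ball_lip[OF f(1)] unfolding g_def by (simp add: abs_minus_commute)
    qed
    moreover have "\<phi> g = - \<phi> f" unfolding g_def using dual_scale[OF du f0, of "-1"] by simp
    ultimately have "g \<in> slice M d z \<phi> \<alpha>" using f False unfolding slice_def by simp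
    then show ?thesis by blast
  qed
qed

lemma comb_lip:
  assumes ms: "Metric_space M d" and lam: "\<forall>i<n. lam i \<ge> 0" "(\<Sum>i<n. lam i) = 1"
    and F: "\<forall>i<n. F i \<in> lip0_ball M d z" and x: "x \<in> M" and y: "y \<in> M"
  shows "\<bar>(\<Sum>i<n. lam i * F i x) - (\<Sum>i<n. lam i * F i y)\<bar> \<le> d x y"
proof -
  interpret Metric_space M d by (rule ms)
  have "\<bar>(\<Sum>i<n. lam i * F i x) - (\<Sum>i<n. lam i * F i y)\<bar> = \<bar>\<Sum>i<n. lam i * (F i x - F i y)\<bar>"
    by (simp add: sum_subtractf[symmetric] algebra_simps)
  also have "\<dots> \<le> (\<Sum>i<n. \<bar>lam i * (F i x - F i y)\<bar>)" by (rule sum_abs)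
  also have "\<dots> \<le> (\<Sum>i<n. lam i * d x y)"
  proof (rule sum_mono)
    fix i assume "i \<in> {..<n}"
    then have "lam i \<ge> 0" "\<bar>F i x - F i y\<bar> \<le> d x y" using lam F ball_lip x y by auto
    then show "\<bar>lam i * (F i x - F i y)\<bar> \<le> lam i * d x y" by (simp add: abs_mult mult_left_mono)
  qed
  also have "\<dots> = d x y" using lam by (simp add: sum_distrib_right[symmetric])
  finally show ?thesis .
qed

lemma comb_mem:
  "(\<forall>i<n. F i \<in> S i) \<Longrightarrow> (\<lambda>x. \<Sum>i<n. lam i * F i x) \<in> convex_comb_sets n lam S"
  unfolding convex_comb_sets_def by blast

lemma cheb:
  assumes ms: "Metric_space M d" and ba: "is_ba (Mtilde M) \<mu>" and pos: "positive_ba (Mtilde M) \<mu>"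
    and one: "\<mu> (Mtilde M) = 1" and f: "f \<in> lip0_ball M d z"
    and gt: "fa_integral (Mtilde M) \<mu> (molecule_val d f) > 1 - \<alpha>" and g1: "\<gamma> < 1"
  shows "\<mu> {p\<in>Mtilde M. molecule_val d f p < \<gamma>} < \<alpha> / (1 - \<gamma>)"
proof -
  interpret Metric_space M d by (rule ms)
  interpret pba "Mtilde M" \<mu> by unfold_locales (rule ba, rule pos)
  define B where "B = {p\<in>Mtilde M. molecule_val d f p < \<gamma>}"
  have BT: "B \<subseteq> Mtilde M" unfolding B_def by blast
  have f0: "f \<in> lip0 M d z" using f unfolding lip0_ball_def by blast
  have "fa_integral (Mtilde M) \<mu> (molecule_val d f) \<le> fa_integral (Mtilde M) \<mu> (\<lambda>p. 1 * (\<lambda>p. 1) p + (\<gamma> - 1) * ind B p)"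
  proof (rule fa_mono[OF mv_bdd[OF f0] bdd_lin[OF bdd_const bdd_ind]])
    show "\<forall>p\<in>Mtilde M. molecule_val d f p \<le> 1 * (\<lambda>p. 1) p + (\<gamma> - 1) * ind B p"
    proof
      fix p assume p: "p \<in> Mtilde M"
      show "molecule_val d f p \<le> 1 * (\<lambda>p. 1) p + (\<gamma> - 1) * ind B p"
      proof (cases "p \<in> B")
        case True then show ?thesis unfolding ind_def B_def by simp
      next
        case False then show ?thesis unfolding ind_def using mv_bound_ball[OF f p] by (simp add: abs_le_iff)
      qed
    qed
  qed
  also have "\<dots> = 1 * fa_integral (Mtilde M) \<mu> (\<lambda>p. 1) + (\<gamma> - 1) * fa_integral (Mtilde M) \<mu> (ind B)"
    by (rule fa_lin[OF bdd_const bdd_ind])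
  also have "\<dots> = 1 + (\<gamma> - 1) * \<mu> B" using fa_const[of 1] fa_ind[OF BT] one by simp
  finally have "1 - \<alpha> < 1 + (\<gamma> - 1) * \<mu> B" using gt by simp
  then have "(1 - \<gamma>) * \<mu> B < \<alpha>" by (simp add: algebra_simps)
  then show ?thesis using g1 unfolding B_def by (simp add: field_simps)
qed

lemma lowfa:
  assumes ms: "Metric_space M d" and ba: "is_ba (Mtilde M) \<mu>" and pos: "positive_ba (Mtilde M) \<mu>"
    and one: "\<mu> (Mtilde M) = 1" and F: "F \<in> lip0_ball M d z" and AT: "A \<subseteq> Mtilde M"
    and Fg: "\<forall>p\<in>A. molecule_val d F p \<ge> \<gamma>" and mA: "\<mu> A \<ge> \<gamma>" and g0: "0 < \<gamma>"
  shows "fa_integral (Mtilde M) \<mu> (molecule_val d F) \<ge> (1 + \<gamma>) * \<gamma> - 1"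
proof -
  interpret Metric_space M d by (rule ms)
  interpret pba "Mtilde M" \<mu> by unfold_locales (rule ba, rule pos)
  have F0: "F \<in> lip0 M d z" using F unfolding lip0_ball_def by blast
  have "(1 + \<gamma>) * \<gamma> \<le> (1 + \<gamma>) * \<mu> A" by (rule mult_left_mono[OF mA]) (use g0 in simp)
  then have "(1 + \<gamma>) * \<gamma> - 1 \<le> (-1) * 1 + (1 + \<gamma>) * \<mu> A" by linarith
  also have "\<dots> = (-1) * fa_integral (Mtilde M) \<mu> (\<lambda>p. 1) + (1 + \<gamma>) * fa_integral (Mtilde M) \<mu> (ind A)"
    using fa_const[of 1] fa_ind[OF AT] one by simp
  also have "\<dots> = fa_integral (Mtilde M) \<mu> (\<lambda>p. (-1) * (\<lambda>p. 1) p + (1 + \<gamma>) * ind A p)"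
    by (rule fa_lin[OF bdd_const bdd_ind, symmetric])
  also have "\<dots> \<le> fa_integral (Mtilde M) \<mu> (molecule_val d F)"
  proof (rule fa_mono[OF bdd_lin[OF bdd_const bdd_ind] mv_bdd[OF F0]])
    show "\<forall>p\<in>Mtilde M. (-1) * (\<lambda>p. 1) p + (1 + \<gamma>) * ind A p \<le> molecule_val d F p"
    proof
      fix p assume p: "p \<in> Mtilde M"
      show "(-1) * (\<lambda>p. 1) p + (1 + \<gamma>) * ind A p \<le> molecule_val d F p"
      proof (cases "p \<in> A")
        case True then show ?thesis unfolding ind_def using Fg by simp
      next
        case False then show ?thesis unfolding ind_def using mv_bound_ball[OF F p] by (simp add: abs_le_iff)
      qed
    qed
  qed
  finally show ?thesis .
qed

lemma pi_sub: "A \<subseteq> Mtilde M \<Longrightarrow> pi_set A \<subseteq> M"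
  unfolding pi_set_def Mtilde_def by blast



lemma forward:
  assumes ms: "Metric_space M d" and zM: "z \<in> M" and SD: "SD2P_lip0 M d z"
    and n1: "n \<ge> 1" and opt: "\<forall>i<n. optimal M d z (\<mu> i) \<and> ba_norm (Mtilde M) (\<mu> i) = 1"
    and g0: "0 < \<gamma>" and g1: "\<gamma> < 1"
  shows "\<exists>(A :: nat \<Rightarrow> ('a \<times> 'a) set) (f :: nat \<Rightarrow> 'a \<Rightarrow> real) (g :: nat \<Rightarrow> 'a \<Rightarrow> real) u v.
          (\<forall>i<n. A i \<subseteq> Mtilde M \<and> \<mu> i (A i) \<ge> \<gamma> \<and>
                 f i \<in> lip0_ball M d z \<and> g i \<in> lip0_ball M d z) \<and>
          u \<in> M \<and> v \<in> M \<and> u \<noteq> v \<and>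
          (\<forall>i<n. \<forall>p\<in>A i. molecule_val d (f i) p \<ge> \<gamma> \<and> molecule_val d (g i) p \<ge> \<gamma>) \<and>
          (\<forall>i<n. \<forall>x\<in>pi_set (A i). \<forall>y\<in>pi_set (A i).
              max (f i x - f i y) (g i y - g i x) + \<gamma> * d u v \<le> d x u + d y v)"
proof -
  interpret Metric_space M d by (rule ms)
  define T where "T = Mtilde M"
  have mu: "is_ba T (\<mu> i) \<and> positive_ba T (\<mu> i) \<and> \<mu> i T = 1 \<and> dual_norm M d z (Phi_star M d (\<mu> i)) = 1" if "i < n" for i
  proof -
    have o: "optimal M d z (\<mu> i)" "ba_norm T (\<mu> i) = 1" using opt that unfolding T_def by auto
    then have b: "is_ba T (\<mu> i)" "positive_ba T (\<mu> i)" "dual_norm M d z (Phi_star M d (\<mu> i)) = ba_norm T (\<mu> i)"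
      unfolding optimal_def T_def by auto
    interpret pba T "\<mu> i" by unfold_locales (rule b(1), rule b(2))
    show ?thesis using b o ba_norm_pos by simp
  qed
  define \<phi> where "\<phi> i = Phi_star M d (\<mu> i)" for i
  have du: "lip0_dual M d z (\<phi> i) \<and> dual_norm M d z (\<phi> i) = 1" if "i < n" for i
    using phi_dual[OF ms, of "\<mu> i" z] mu[OF that] unfolding \<phi>_def T_def by auto
  define \<alpha> where "\<alpha> = (1 - \<gamma>)^2 / 2"
  have a0: "\<alpha> > 0" unfolding \<alpha>_def using g1 by simp
  define lam where "lam i = 1 / real n" for i :: nat
  have lam: "\<forall>i<n. lam i \<ge> 0" "(\<Sum>i<n. lam i) = 1" unfolding lam_def using n1 by auto
  define S where "S = (\<lambda>i. slice M d z (\<phi> i) \<alpha>)"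
  define CC where "CC = convex_comb_sets n lam S"
  define Dset where "Dset = {lipnorm M d (\<lambda>x. f x - g x) | f g. f \<in> CC \<and> g \<in> CC}"
  have hyp: "(\<forall>i<n. lam i \<ge> 0) \<and> (\<Sum>i<n. lam i) = 1 \<and>
        (\<forall>i<n. lip0_dual M d z (\<phi> i) \<and> dual_norm M d z (\<phi> i) = 1 \<and> \<alpha> > 0)"
    using lam du a0 by auto
  have H: "\<forall>n lam \<phi> \<alpha>. (\<forall>i<n. lam i \<ge> 0) \<and> (\<Sum>i<n. lam i) = 1 \<and>
        (\<forall>i<n. lip0_dual M d z (\<phi> i) \<and> dual_norm M d z (\<phi> i) = 1 \<and> \<alpha> i > 0) \<longrightarrow>
        lip_diam M d (convex_comb_sets n lam (\<lambda>i. slice M d z (\<phi> i) (\<alpha> i))) = 2"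
    using SD unfolding SD2P_lip0_def .
  have "lip_diam M d (convex_comb_sets n lam (\<lambda>i. slice M d z (\<phi> i) \<alpha>)) = 2"
    using mp[OF H[THEN spec[of _ n], THEN spec[of _ lam], THEN spec[of _ \<phi>], THEN spec[of _ "\<lambda>i. \<alpha>"]] hyp] .
  then have SupD: "Sup Dset = 2" unfolding lip_diam_def Dset_def CC_def S_def .
  have "\<forall>i. \<exists>f. i < n \<longrightarrow> f \<in> S i"
  proof
    fix i show "\<exists>f. i < n \<longrightarrow> f \<in> S i"
    proof (cases "i < n")
      case True
      have du1: "lip0_dual M d z (\<phi> i)" and du2: "dual_norm M d z (\<phi> i) = 1" using du[OF True] by auto
      from slice_ne[OF ms du1 du2 a0] obtain f where "f \<in> slice M d z (\<phi> i) \<alpha>" ..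
      then have "i < n \<longrightarrow> f \<in> S i" unfolding S_def by simp
      then show ?thesis by blast
    qed simp
  qed
  from choice[OF this] obtain F0 where F0: "\<forall>i. i < n \<longrightarrow> F0 i \<in> S i" ..
  have hCC: "(\<lambda>x. \<Sum>i<n. lam i * F0 i x) \<in> CC" unfolding CC_def by (rule comb_mem) (use F0 in simp)
  have "lipnorm M d (\<lambda>x. (\<lambda>x. \<Sum>i<n. lam i * F0 i x) x - (\<lambda>x. \<Sum>i<n. lam i * F0 i x) x) \<in> Dset"
    unfolding Dset_def mem_Collect_eq
    by (rule exI[of _ "\<lambda>x. \<Sum>i<n. lam i * F0 i x"], rule exI[of _ "\<lambda>x. \<Sum>i<n. lam i * F0 i x"]) (simp add: hCC)
  then have Dne: "Dset \<noteq> {}" by blast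
  define \<delta> where "\<delta> = (1 - \<gamma>) / real n"
  have np: "real n \<ge> 1" using n1 by simp
  have d0: "\<delta> > 0" unfolding \<delta>_def using g1 np by simp
  have d1: "\<delta> < 1"
  proof -
    have "(1 - \<gamma>) * 1 \<le> (1 - \<gamma>) * real n" by (rule mult_left_mono) (use np g1 in auto)
    then have "\<delta> \<le> 1 - \<gamma>" unfolding \<delta>_def using np by (simp add: divide_le_eq mult.commute)
    then show ?thesis using g0 by simp
  qed
  have "2 - \<delta> < Sup Dset" using SupD d0 by simp
  then obtain s where s: "s \<in> Dset" "2 - \<delta> < s" using Dne by (rule less_cSupE)
  then obtain h1 h2 where h: "s = lipnorm M d (\<lambda>x. h1 x - h2 x)" "h1 \<in> CC" "h2 \<in> CC" unfolding Dset_def by blast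
  obtain P where P: "h1 = (\<lambda>x. \<Sum>i<n. lam i * P i x)" "\<forall>i<n. P i \<in> S i"
    using h(2) unfolding CC_def convex_comb_sets_def by blast
  obtain Q where Q: "h2 = (\<lambda>x. \<Sum>i<n. lam i * Q i x)" "\<forall>i<n. Q i \<in> S i"
    using h(3) unfolding CC_def convex_comb_sets_def by blast
  have Pb: "P i \<in> lip0_ball M d z" "Q i \<in> lip0_ball M d z" if "i < n" for i
    using P(2) Q(2) that unfolding S_def slice_def by auto
  have Pphi: "\<phi> i (P i) > 1 - \<alpha>" "\<phi> i (Q i) > 1 - \<alpha>" if "i < n" for i
    using P(2) Q(2) that unfolding S_def slice_def by auto
  define Df where "Df = (\<lambda>x. h1 x - h2 x)"
  have "2 - \<delta> < Sup ({\<bar>Df x - Df y\<bar> / d x y | x y. x \<in> M \<and> y \<in> M \<and> x \<noteq> y} \<union> {0})"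
    using s h(1) unfolding lipnorm_def Df_def by simp
  then obtain t where t: "t \<in> {\<bar>Df x - Df y\<bar> / d x y | x y. x \<in> M \<and> y \<in> M \<and> x \<noteq> y} \<union> {0}" "2 - \<delta> < t"
    by (rule less_cSupE) simp
  have "t \<noteq> 0" using t(2) d1 by simp
  then obtain x y where xy: "x \<in> M" "y \<in> M" "x \<noteq> y" "t = \<bar>Df x - Df y\<bar> / d x y" using t(1) by blast
  have dxy: "d x y > 0" by (rule dpos[OF xy(1-3)])
  have big: "\<bar>Df x - Df y\<bar> > (2 - \<delta>) * d x y" using t(2) xy(4) dxy by (simp add: less_divide_eq)
  obtain u v where uv: "u \<in> M" "v \<in> M" "u \<noteq> v" "Df v - Df u > (2 - \<delta>) * d u v"
  proof (cases "Df x - Df y \<ge> 0")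
    case True
    then have "Df x - Df y > (2 - \<delta>) * d y x" using big commute[of x y] by simp
    then show ?thesis using that[of y x] xy by auto
  next
    case False
    then have "Df y - Df x > (2 - \<delta>) * d x y" using big by simp
    then show ?thesis using that[of x y] xy by auto
  qed
  have duv: "d u v > 0" by (rule dpos[OF uv(1-3)])
  define a where "a i = (P i v - P i u) + (Q i u - Q i v)" for i
  have Dsum: "Df v - Df u = (\<Sum>i<n. lam i * a i)"
    unfolding Df_def P(1) Q(1) a_def by (rule sum_comb)
  have bl: "P i v - P i u \<le> d u v" "Q i u - Q i v \<le> d u v" if "i < n" for i
    using ball_lip[OF Pb(1)[OF that] uv(2) uv(1)] ball_lip[OF Pb(2)[OF that] uv(1) uv(2)] commute[of v u]
    by (auto simp: abs_le_iff)
  have ale: "\<forall>i<n. a i \<le> 2 * d u v"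
  proof (intro allI impI)
    fix i assume "i < n"
    from bl[OF this] show "a i \<le> 2 * d u v" unfolding a_def by simp
  qed
  have agt: "a i > (1 + \<gamma>) * d u v" if "i < n" for i
  proof (rule avg_lemma[OF n1 ale _ that])
    show "(\<Sum>i<n. (1 / real n) * a i) > (2 - (1 - \<gamma>) / real n) * d u v"
      using uv(4) Dsum unfolding lam_def \<delta>_def by simp
  qed
  have Pgap: "P i v - P i u > \<gamma> * d u v" "Q i u - Q i v > \<gamma> * d u v" if "i < n" for i
    using agt[OF that] bl[OF that] unfolding a_def by (simp_all add: algebra_simps)
  define A where "A i = {p\<in>T. molecule_val d (P i) p \<ge> \<gamma> \<and> molecule_val d (Q i) p \<ge> \<gamma>}" for i
  have AT: "A i \<subseteq> T" for i unfolding A_def by blast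
  have muA: "\<mu> i (A i) \<ge> \<gamma>" if i: "i < n" for i
  proof -
    have m: "is_ba T (\<mu> i)" "positive_ba T (\<mu> i)" "\<mu> i T = 1" using mu[OF i] by auto
    interpret pba T "\<mu> i" by unfold_locales (rule m(1), rule m(2))
    define B1 where "B1 = {p\<in>T. molecule_val d (P i) p < \<gamma>}"
    define B2 where "B2 = {p\<in>T. molecule_val d (Q i) p < \<gamma>}"
    have c1: "\<mu> i B1 < \<alpha> / (1 - \<gamma>)" unfolding B1_def T_def
      by (rule cheb[OF ms _ _ _ Pb(1)[OF i] _ g1]) (use m Pphi[OF i] in \<open>auto simp: T_def \<phi>_def Phi_star_def\<close>)
    have c2: "\<mu> i B2 < \<alpha> / (1 - \<gamma>)" unfolding B2_def T_def
      by (rule cheb[OF ms _ _ _ Pb(2)[OF i] _ g1]) (use m Pphi[OF i] in \<open>auto simp: T_def \<phi>_def Phi_star_def\<close>)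
    have "T - A i = B1 \<union> B2" unfolding A_def B1_def B2_def by auto
    then have "\<mu> i (T - A i) \<le> \<mu> i B1 + \<mu> i B2" using subadd[of B1 B2] unfolding B1_def B2_def by auto
    moreover have "\<mu> i (T - A i) = 1 - \<mu> i (A i)" using diff[OF AT] m(3) by simp
    moreover have "2 * (\<alpha> / (1 - \<gamma>)) = 1 - \<gamma>" unfolding \<alpha>_def using g1 by (simp add: power2_eq_square field_simps)
    ultimately show ?thesis using c1 c2 by linarith
  qed
  have pic: "max (P i x - P i y) (Q i y - Q i x) + \<gamma> * d u v \<le> d x u + d y v"
    if i: "i < n" and x: "x \<in> M" and y: "y \<in> M" for i x y
  proof -
    have l1: "P i x - P i u \<le> d x u" "P i v - P i y \<le> d y v"
      using ball_lip[OF Pb(1)[OF i] x uv(1)] ball_lip[OF Pb(1)[OF i] uv(2) y] commute[of v y] by (auto simp: abs_le_iff)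
    have l2: "Q i y - Q i v \<le> d y v" "Q i u - Q i x \<le> d x u"
      using ball_lip[OF Pb(2)[OF i] y uv(2)] ball_lip[OF Pb(2)[OF i] uv(1) x] commute[of u x] by (auto simp: abs_le_iff)
    have "P i x - P i y + \<gamma> * d u v \<le> d x u + d y v" using l1 Pgap[OF i] by linarith
    moreover have "Q i y - Q i x + \<gamma> * d u v \<le> d x u + d y v" using l2 Pgap[OF i] by linarith
    ultimately show ?thesis by simp
  qed
  have final: "(\<forall>i<n. A i \<subseteq> Mtilde M \<and> \<mu> i (A i) \<ge> \<gamma> \<and>
                 P i \<in> lip0_ball M d z \<and> Q i \<in> lip0_ball M d z) \<and>
          u \<in> M \<and> v \<in> M \<and> u \<noteq> v \<and>
          (\<forall>i<n. \<forall>p\<in>A i. molecule_val d (P i) p \<ge> \<gamma> \<and> molecule_val d (Q i) p \<ge> \<gamma>) \<and>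
          (\<forall>i<n. \<forall>x\<in>pi_set (A i). \<forall>y\<in>pi_set (A i).
              max (P i x - P i y) (Q i y - Q i x) + \<gamma> * d u v \<le> d x u + d y v)"
  proof (intro conjI allI impI ballI)
    fix i assume i: "i < n"
    show "A i \<subseteq> Mtilde M" using AT unfolding T_def by blast
    show "\<mu> i (A i) \<ge> \<gamma>" by (rule muA[OF i])
    show "P i \<in> lip0_ball M d z" "Q i \<in> lip0_ball M d z" using Pb[OF i] by auto
  next
    show "u \<in> M" "v \<in> M" "u \<noteq> v" using uv by auto
  next
    fix i p assume "i < n" "p \<in> A i"
    then show "molecule_val d (P i) p \<ge> \<gamma>" "molecule_val d (Q i) p \<ge> \<gamma>" unfolding A_def by auto
  next
    fix i x y assume i: "i < n" and x: "x \<in> pi_set (A i)" and y: "y \<in> pi_set (A i)"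
    have "pi_set (A i) \<subseteq> M" using pi_sub[of "A i" M] AT unfolding T_def by blast
    then show "max (P i x - P i y) (Q i y - Q i x) + \<gamma> * d u v \<le> d x u + d y v"
      using pic[OF i] x y by blast
  qed
  show ?thesis
    by (rule exI[of _ A], rule exI[of _ P], rule exI[of _ Q], rule exI[of _ u], rule exI[of _ v], rule final)
qed



lemma norm_props:
  assumes ms: "Metric_space M d" and zM: "z \<in> M" and L: "\<forall>x\<in>M. \<forall>y\<in>M. \<bar>F x - F y\<bar> \<le> d x y"
  shows "(\<lambda>x. if x \<in> M then F x - F z else 0) \<in> lip0_ball M d z"
    and "\<forall>x\<in>M. \<forall>y\<in>M. (\<lambda>x. if x \<in> M then F x - F z else 0) x - (\<lambda>x. if x \<in> M then F x - F z else 0) y = F x - F y"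
    and "\<forall>p\<in>Mtilde M. molecule_val d (\<lambda>x. if x \<in> M then F x - F z else 0) p = molecule_val d F p"
proof -
  interpret Metric_space M d by (rule ms)
  show "(\<lambda>x. if x \<in> M then F x - F z else 0) \<in> lip0_ball M d z"
    by (rule ball_intro) (use zM L in auto)
  show "\<forall>x\<in>M. \<forall>y\<in>M. (\<lambda>x. if x \<in> M then F x - F z else 0) x - (\<lambda>x. if x \<in> M then F x - F z else 0) y = F x - F y"
    by simp
  show "\<forall>p\<in>Mtilde M. molecule_val d (\<lambda>x. if x \<in> M then F x - F z else 0) p = molecule_val d F p"
  proof
    fix p assume "p \<in> Mtilde M"
    then have "fst p \<in> M" "snd p \<in> M" using Mtilde_mem[of p M] by auto
    then show "molecule_val d (\<lambda>x. if x \<in> M then F x - F z else 0) p = molecule_val d F p"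
      unfolding molecule_val_def by simp
  qed
qed

lemma gam_arith:
  fixes m a \<gamma> :: real
  assumes "0 < m" "m \<le> a" "\<gamma> = 1 - m / 4"
  shows "(1 + \<gamma>) * \<gamma> - 1 > 1 - a"
proof -
  have "(1 + \<gamma>) * \<gamma> - 1 = 1 - 3 * m / 4 + m * m / 16" unfolding assms(3) by (simp add: field_simps)
  moreover have "m * m \<ge> 0" by simp
  ultimately show ?thesis using assms(1,2) by linarith
qed

lemma pi_mem: "p \<in> A \<Longrightarrow> fst p \<in> pi_set A \<and> snd p \<in> pi_set A"
proof -
  assume "p \<in> A"
  then have "(fst p, snd p) \<in> A" by simp
  then show ?thesis unfolding pi_set_def by blast
qed

lemma backward:
  assumes ms: "Metric_space M d" and zM: "z \<in> M"
    and R: "\<forall>(n::nat) (\<mu> :: nat \<Rightarrow> ('a \<times> 'a) set \<Rightarrow> real) (\<gamma>::real).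
       n \<ge> 1 \<and> (\<forall>i<n. optimal M d z (\<mu> i) \<and> ba_norm (Mtilde M) (\<mu> i) = 1) \<and>
       0 < \<gamma> \<and> \<gamma> < 1 \<longrightarrow>
       (\<exists>(A :: nat \<Rightarrow> ('a \<times> 'a) set) (f :: nat \<Rightarrow> 'a \<Rightarrow> real) (g :: nat \<Rightarrow> 'a \<Rightarrow> real) u v.
          (\<forall>i<n. A i \<subseteq> Mtilde M \<and> \<mu> i (A i) \<ge> \<gamma> \<and>
                 f i \<in> lip0_ball M d z \<and> g i \<in> lip0_ball M d z) \<and>
          u \<in> M \<and> v \<in> M \<and> u \<noteq> v \<and>
          (\<forall>i<n. \<forall>p\<in>A i. molecule_val d (f i) p \<ge> \<gamma> \<and> molecule_val d (g i) p \<ge> \<gamma>) \<and>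
          (\<forall>i<n. \<forall>x\<in>pi_set (A i). \<forall>y\<in>pi_set (A i).
              max (f i x - f i y) (g i y - g i x) + \<gamma> * d u v \<le> d x u + d y v))"
  shows "SD2P_lip0 M d z"
proof -
  interpret Metric_space M d by (rule ms)
  define T where "T = Mtilde M"
  have main: "lip_diam M d (convex_comb_sets n lam (\<lambda>i. slice M d z (\<phi> i) (\<alpha> i))) = 2"
    if lam0: "\<forall>i<n. lam i \<ge> 0" and lam1: "(\<Sum>i<n. lam i) = 1"
      and H: "\<forall>i<n. lip0_dual M d z (\<phi> i) \<and> dual_norm M d z (\<phi> i) = 1 \<and> \<alpha> i > 0"
    for n lam \<phi> \<alpha>
  proof -
    have n1: "n \<ge> 1"
    proof (rule ccontr)
      assume "\<not> n \<ge> 1"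
      then have "n = 0" by simp
      then show False using lam1 by simp
    qed
    have du1: "lip0_dual M d z (\<phi> i)" and du2: "dual_norm M d z (\<phi> i) = 1" and a0: "\<alpha> i > 0"
      if "i < n" for i using H that by auto
    have Tne: "T \<noteq> {}"
    proof
      assume T0: "T = {}"
      have all0: "f = (\<lambda>x. 0)" if f: "f \<in> lip0 M d z" for f
      proof
        fix x show "f x = 0"
        proof (cases "x \<in> M")
          case True
          show ?thesis
          proof (cases "x = z")
            case True then show ?thesis using f unfolding lip0_def by auto
          next
            case False
            then have "(x, z) \<in> T" unfolding T_def Mtilde_def using \<open>x \<in> M\<close> zM by auto
            then show ?thesis using T0 by simp
          qed
        next
          case False then show ?thesis using f unfolding lip0_def by auto
        qed
      qed
      have ball: "lip0_ball M d z = {\<lambda>x. 0}"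
        using zero_ball all0 unfolding lip0_ball_def by auto
      have "\<phi> 0 (\<lambda>x. 0 * (0::real)) = 0 * \<phi> 0 (\<lambda>x. 0)" by (rule dual_scale[OF du1[OF _] zero_lip0]) (use n1 in simp)
      then have "\<phi> 0 (\<lambda>x. 0) = 0" by simp
      then have "dual_norm M d z (\<phi> 0) = 0" unfolding dual_norm_def ball by simp
      then show False using du2[of 0] n1 by simp
    qed
    have Tne': "Mtilde M \<noteq> {}" using Tne unfolding T_def .
    have "\<forall>i. \<exists>\<mu>. i < n \<longrightarrow> (is_ba T \<mu> \<and> positive_ba T \<mu> \<and> \<mu> T = 1 \<and> (\<forall>f\<in>lip0 M d z. Phi_star M d \<mu> f = \<phi> i f))"
    proof
      fix i
      show "\<exists>\<mu>. i < n \<longrightarrow> (is_ba T \<mu> \<and> positive_ba T \<mu> \<and> \<mu> T = 1 \<and> (\<forall>f\<in>lip0 M d z. Phi_star M d \<mu> f = \<phi> i f))"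
      proof (cases "i < n")
        case True
        from represent[OF ms zM Tne' du1[OF True] du2[OF True]]
        obtain \<mu> where "is_ba (Mtilde M) \<mu> \<and> positive_ba (Mtilde M) \<mu> \<and> \<mu> (Mtilde M) = 1 \<and> (\<forall>f\<in>lip0 M d z. Phi_star M d \<mu> f = \<phi> i f)" ..
        then have "i < n \<longrightarrow> (is_ba T \<mu> \<and> positive_ba T \<mu> \<and> \<mu> T = 1 \<and> (\<forall>f\<in>lip0 M d z. Phi_star M d \<mu> f = \<phi> i f))"
          unfolding T_def by simp
        then show ?thesis by blast
      qed simp
    qed
    from choice[OF this] obtain \<mu>s where \<mu>s: "\<forall>i. i < n \<longrightarrow> (is_ba T (\<mu>s i) \<and> positive_ba T (\<mu>s i) \<and> \<mu>s i T = 1 \<and> (\<forall>f\<in>lip0 M d z. Phi_star M d (\<mu>s i) f = \<phi> i f))" ..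
    have mus: "is_ba T (\<mu>s i)" "positive_ba T (\<mu>s i)" "\<mu>s i T = 1" "\<forall>f\<in>lip0 M d z. Phi_star M d (\<mu>s i) f = \<phi> i f"
      if "i < n" for i using \<mu>s that by auto
    have opt: "\<forall>i<n. optimal M d z (\<mu>s i) \<and> ba_norm (Mtilde M) (\<mu>s i) = 1"
    proof (intro allI impI)
      fix i assume i: "i < n"
      interpret pba T "\<mu>s i" by unfold_locales (rule mus(1)[OF i], rule mus(2)[OF i])
      have bn: "ba_norm T (\<mu>s i) = 1" using ba_norm_pos mus(3)[OF i] by simp
      have "(\<lambda>f. \<bar>Phi_star M d (\<mu>s i) f\<bar>) ` lip0_ball M d z = (\<lambda>f. \<bar>\<phi> i f\<bar>) ` lip0_ball M d z"
        by (rule image_cong) (use mus(4)[OF i] in \<open>auto simp: lip0_ball_def\<close>)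
      then have dn: "dual_norm M d z (Phi_star M d (\<mu>s i)) = 1" using du2[OF i] unfolding dual_norm_def by simp
      show "optimal M d z (\<mu>s i) \<and> ba_norm (Mtilde M) (\<mu>s i) = 1"
        unfolding optimal_def using mus(1,2)[OF i] bn dn unfolding T_def by simp
    qed
    define S where "S = (\<lambda>i. slice M d z (\<phi> i) (\<alpha> i))"
    define CC where "CC = convex_comb_sets n lam S"
    define Dset where "Dset = {lipnorm M d (\<lambda>x. f x - g x) | f g. f \<in> CC \<and> g \<in> CC}"
    have CCb: "\<forall>x\<in>M. \<forall>y\<in>M. \<bar>h x - h y\<bar> \<le> d x y" if hC: "h \<in> CC" for h
    proof -
      obtain P where P: "h = (\<lambda>x. \<Sum>i<n. lam i * P i x)" "\<forall>i<n. P i \<in> S i"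
        using hC unfolding CC_def convex_comb_sets_def by blast
      have "\<forall>i<n. P i \<in> lip0_ball M d z" using P(2) unfolding S_def slice_def by auto
      then show ?thesis using comb_lip[OF ms lam0 lam1] P(1) by simp
    qed
    have diffb: "\<forall>x\<in>M. \<forall>y\<in>M. \<bar>(h1 x - h2 x) - (h1 y - h2 y)\<bar> \<le> 2 * d x y" if "h1 \<in> CC" "h2 \<in> CC" for h1 h2
    proof (intro ballI)
      fix x y assume x: "x \<in> M" and y: "y \<in> M"
      have "\<bar>h1 x - h1 y\<bar> \<le> d x y" "\<bar>h2 x - h2 y\<bar> \<le> d x y" using CCb that x y by auto
      then show "\<bar>(h1 x - h2 x) - (h1 y - h2 y)\<bar> \<le> 2 * d x y" by (simp add: abs_le_iff)
    qed
    have ub: "s \<le> 2" if sD: "s \<in> Dset" for s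
    proof -
      obtain h1 h2 where h: "s = lipnorm M d (\<lambda>x. h1 x - h2 x)" "h1 \<in> CC" "h2 \<in> CC"
        using sD unfolding Dset_def by blast
      show ?thesis unfolding h(1) by (rule lipnorm_le) (use diffb[OF h(2,3)] in auto)
    qed
    have key: "\<exists>s\<in>Dset. s > 2 - \<epsilon>" if ep: "\<epsilon> > 0" for \<epsilon>
    proof -
      define \<alpha>m where "\<alpha>m = Min (\<alpha> ` {..<n})"
      have fin: "finite (\<alpha> ` {..<n})" by simp
      have "0 \<in> {..<n}" using n1 by simp
      then have ne: "\<alpha> ` {..<n} \<noteq> {}" by blast
      have am0: "\<alpha>m > 0" unfolding \<alpha>m_def using Min_gr_iff[OF fin ne] a0 by auto
      have amle: "\<alpha>m \<le> \<alpha> i" if "i < n" for i unfolding \<alpha>m_def using Min_le[OF fin] that by auto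
      define m where "m = min (min \<alpha>m \<epsilon>) 1"
      have m0: "m > 0" and m1: "m \<le> 1" and me: "m \<le> \<epsilon>" and ma: "m \<le> \<alpha> i" if "i < n" for i
        unfolding m_def using am0 ep amle[OF that] by auto
      have m0': "m > 0" unfolding m_def using am0 ep by auto
      have m1': "m \<le> 1" unfolding m_def by auto
      have me': "m \<le> \<epsilon>" unfolding m_def by auto
      define \<gamma> where "\<gamma> = 1 - m / 4"
      have g0: "0 < \<gamma>" and g1: "\<gamma> < 1" unfolding \<gamma>_def using m0' m1' by auto
      have hypR: "n \<ge> 1 \<and> (\<forall>i<n. optimal M d z (\<mu>s i) \<and> ba_norm (Mtilde M) (\<mu>s i) = 1) \<and> 0 < \<gamma> \<and> \<gamma> < 1"
        using n1 opt g0 g1 by blast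
      have "\<exists>(A :: nat \<Rightarrow> ('a \<times> 'a) set) (f :: nat \<Rightarrow> 'a \<Rightarrow> real) (g :: nat \<Rightarrow> 'a \<Rightarrow> real) u v.
          (\<forall>i<n. A i \<subseteq> Mtilde M \<and> \<mu>s i (A i) \<ge> \<gamma> \<and>
                 f i \<in> lip0_ball M d z \<and> g i \<in> lip0_ball M d z) \<and>
          u \<in> M \<and> v \<in> M \<and> u \<noteq> v \<and>
          (\<forall>i<n. \<forall>p\<in>A i. molecule_val d (f i) p \<ge> \<gamma> \<and> molecule_val d (g i) p \<ge> \<gamma>) \<and>
          (\<forall>i<n. \<forall>x\<in>pi_set (A i). \<forall>y\<in>pi_set (A i).
              max (f i x - f i y) (g i y - g i x) + \<gamma> * d u v \<le> d x u + d y v)"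
        using mp[OF R[THEN spec[of _ n], THEN spec[of _ \<mu>s], THEN spec[of _ \<gamma>]] hypR] .
      then obtain A f g u v where
        c1: "\<forall>i<n. A i \<subseteq> Mtilde M \<and> \<mu>s i (A i) \<ge> \<gamma> \<and> f i \<in> lip0_ball M d z \<and> g i \<in> lip0_ball M d z"
        and uM: "u \<in> M" and vM: "v \<in> M" and uv: "u \<noteq> v"
        and c3: "\<forall>i<n. \<forall>p\<in>A i. molecule_val d (f i) p \<ge> \<gamma> \<and> molecule_val d (g i) p \<ge> \<gamma>"
        and c4: "\<forall>i<n. \<forall>x\<in>pi_set (A i). \<forall>y\<in>pi_set (A i).
              max (f i x - f i y) (g i y - g i x) + \<gamma> * d u v \<le> d x u + d y v"
        by blast
      have duv: "d u v > 0" by (rule dpos[OF uM vM uv])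
      have build: "\<exists>FG. i < n \<longrightarrow> (fst FG \<in> S i \<and> snd FG \<in> S i \<and> \<gamma> * d u v \<le> fst FG v - fst FG u \<and> \<gamma> * d u v \<le> snd FG u - snd FG v)" for i
      proof (cases "i < n")
        case False then show ?thesis by simp
      next
        case i: True
        have Ai: "A i \<subseteq> T" "\<mu>s i (A i) \<ge> \<gamma>" "f i \<in> lip0_ball M d z" "g i \<in> lip0_ball M d z"
          using c1 i unfolding T_def by auto
        interpret pba T "\<mu>s i" by unfold_locales (rule mus(1)[OF i], rule mus(2)[OF i])
        define Ps where "Ps = pi_set (A i)"
        have PsM: "Ps \<subseteq> M" unfolding Ps_def using pi_sub[of "A i" M] Ai(1) unfolding T_def by blast
        have "A i \<noteq> {}"
        proof
          assume "A i = {}"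
          then have "\<mu>s i (A i) = 0" using empty0 by simp
          then show False using Ai(2) g0 by simp
        qed
        then obtain p0 where p0: "p0 \<in> A i" by blast
        have Psne: "Ps \<noteq> {}" using pi_mem[OF p0] unfolding Ps_def by blast
        have hLf: "\<forall>x\<in>Ps. \<forall>y\<in>Ps. \<bar>f i x - f i y\<bar> \<le> d x y" using ball_lip[OF Ai(3)] PsM by blast
        have hLg: "\<forall>x\<in>Ps. \<forall>y\<in>Ps. \<bar>g i x - g i y\<bar> \<le> d x y" using ball_lip[OF Ai(4)] PsM by blast
        have condF: "\<forall>x\<in>Ps. \<forall>y\<in>Ps. f i x - f i y + \<gamma> * d u v \<le> d x u + d y v"
        proof (intro ballI)
          fix x y assume "x \<in> Ps" "y \<in> Ps"
          then have "max (f i x - f i y) (g i y - g i x) + \<gamma> * d u v \<le> d x u + d y v"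
            using c4 i unfolding Ps_def by blast
          then show "f i x - f i y + \<gamma> * d u v \<le> d x u + d y v"
            using max.cobounded1[of "f i x - f i y" "g i y - g i x"] by linarith
        qed
        have condG: "\<forall>x\<in>Ps. \<forall>y\<in>Ps. g i x - g i y + \<gamma> * d v u \<le> d x v + d y u"
        proof (intro ballI)
          fix x y assume "x \<in> Ps" "y \<in> Ps"
          then have "max (f i y - f i x) (g i x - g i y) + \<gamma> * d u v \<le> d y u + d x v"
            using c4 i unfolding Ps_def by blast
          then show "g i x - g i y + \<gamma> * d v u \<le> d x v + d y u"
            using mult_left_mono_neg[of 0 0 \<gamma>] arg_cong[OF commute[of v u], of "\<lambda>t. \<gamma> * t"] max.cobounded2[of "g i x - g i y" "f i y - f i x"] by linarith
        qed
        obtain F where F: "\<forall>x\<in>M. \<forall>y\<in>M. \<bar>F x - F y\<bar> \<le> d x y" "\<forall>x\<in>Ps. F x = f i x" "\<gamma> * d u v \<le> F v - F u"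
          using ext2[OF PsM Psne hLf uM vM uv _ _ condF] g0 g1 by auto
        obtain G where G: "\<forall>x\<in>M. \<forall>y\<in>M. \<bar>G x - G y\<bar> \<le> d x y" "\<forall>x\<in>Ps. G x = g i x" "\<gamma> * d v u \<le> G u - G v"
          using ext2[OF PsM Psne hLg vM uM uv[symmetric] _ _ condG] g0 g1 by auto
        define NF where "NF = (\<lambda>x. if x \<in> M then F x - F z else 0)"
        define NG where "NG = (\<lambda>x. if x \<in> M then G x - G z else 0)"
        note nF = norm_props[OF ms zM F(1), folded NF_def]
        note nG = norm_props[OF ms zM G(1), folded NG_def]
        have slice_of: "N \<in> S i"
          if Nb: "N \<in> lip0_ball M d z" and Nmv: "\<forall>p\<in>A i. molecule_val d N p \<ge> \<gamma>" for N
        proof -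
          have N0: "N \<in> lip0 M d z" using Nb unfolding lip0_ball_def by blast
          have "fa_integral (Mtilde M) (\<mu>s i) (molecule_val d N) \<ge> (1 + \<gamma>) * \<gamma> - 1"
          proof -
            have b1: "is_ba (Mtilde M) (\<mu>s i)" "positive_ba (Mtilde M) (\<mu>s i)" "\<mu>s i (Mtilde M) = 1"
              "A i \<subseteq> Mtilde M" using mus[OF i] Ai(1) unfolding T_def by auto
            show ?thesis by (rule lowfa[OF ms b1(1) b1(2) b1(3) Nb b1(4) Nmv Ai(2) g0])
          qed
          moreover have "\<phi> i N = fa_integral (Mtilde M) (\<mu>s i) (molecule_val d N)"
            using mus(4)[OF i] N0 unfolding Phi_star_def by simp
          moreover have "(1 + \<gamma>) * \<gamma> - 1 > 1 - \<alpha> i" by (rule gam_arith[OF m0' ma[OF i] \<gamma>_def])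
          ultimately have "\<phi> i N > 1 - \<alpha> i" by linarith
          then show ?thesis using Nb unfolding S_def slice_def by simp
        qed
        have mvF: "\<forall>p\<in>A i. molecule_val d NF p \<ge> \<gamma>"
        proof
          fix p assume p: "p \<in> A i"
          have pT: "p \<in> Mtilde M" using p Ai(1) unfolding T_def by blast
          have "fst p \<in> Ps" "snd p \<in> Ps" using pi_mem[OF p] unfolding Ps_def by auto
          then have "molecule_val d F p = molecule_val d (f i) p" unfolding molecule_val_def using F(2) by simp
          then show "molecule_val d NF p \<ge> \<gamma>" using nF(3) pT c3 i p by simp
        qed
        have mvG: "\<forall>p\<in>A i. molecule_val d NG p \<ge> \<gamma>"
        proof
          fix p assume p: "p \<in> A i"
          have pT: "p \<in> Mtilde M" using p Ai(1) unfolding T_def by blast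
          have "fst p \<in> Ps" "snd p \<in> Ps" using pi_mem[OF p] unfolding Ps_def by auto
          then have "molecule_val d G p = molecule_val d (g i) p" unfolding molecule_val_def using G(2) by simp
          then show "molecule_val d NG p \<ge> \<gamma>" using nG(3) pT c3 i p by simp
        qed
        have "NF \<in> S i" by (rule slice_of[OF nF(1) mvF])
        moreover have "NG \<in> S i" by (rule slice_of[OF nG(1) mvG])
        moreover have "\<gamma> * d u v \<le> NF v - NF u" unfolding NF_def using uM vM F(3) by simp
        moreover have "\<gamma> * d u v \<le> NG u - NG v" unfolding NG_def using uM vM G(3) commute[of v u] by simp
        ultimately have "i < n \<longrightarrow> (fst (NF, NG) \<in> S i \<and> snd (NF, NG) \<in> S i \<and> \<gamma> * d u v \<le> fst (NF, NG) v - fst (NF, NG) u \<and> \<gamma> * d u v \<le> snd (NF, NG) u - snd (NF, NG) v)"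
          by simp
        then show ?thesis by (rule exI)
      qed
      have "\<forall>i. \<exists>FG. i < n \<longrightarrow> (fst FG \<in> S i \<and> snd FG \<in> S i \<and> \<gamma> * d u v \<le> fst FG v - fst FG u \<and> \<gamma> * d u v \<le> snd FG u - snd FG v)"
        using build by blast
      from choice[OF this] obtain FG where FG: "\<forall>i. i < n \<longrightarrow> (fst (FG i) \<in> S i \<and> snd (FG i) \<in> S i \<and> \<gamma> * d u v \<le> fst (FG i) v - fst (FG i) u \<and> \<gamma> * d u v \<le> snd (FG i) u - snd (FG i) v)" ..
      define Fs where "Fs i = fst (FG i)" for i
      define Gs where "Gs i = snd (FG i)" for i
      have FGs: "Fs i \<in> S i" "Gs i \<in> S i" "\<gamma> * d u v \<le> Fs i v - Fs i u" "\<gamma> * d u v \<le> Gs i u - Gs i v" if "i < n" for i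
        using FG that unfolding Fs_def Gs_def by auto
      define h1 where "h1 = (\<lambda>x. \<Sum>i<n. lam i * Gs i x)"
      define h2 where "h2 = (\<lambda>x. \<Sum>i<n. lam i * Fs i x)"
      have h1C: "h1 \<in> CC" unfolding h1_def CC_def by (rule comb_mem) (use FGs in simp)
      have h2C: "h2 \<in> CC" unfolding h2_def CC_def by (rule comb_mem) (use FGs in simp)
      have sD: "lipnorm M d (\<lambda>x. h1 x - h2 x) \<in> Dset"
        unfolding Dset_def mem_Collect_eq
        by (rule exI[of _ h1], rule exI[of _ h2]) (simp add: h1C h2C)
      have "\<bar>(h1 u - h2 u) - (h1 v - h2 v)\<bar> / d u v \<le> lipnorm M d (\<lambda>x. h1 x - h2 x)"
        by (rule lipnorm_ge[OF diffb[OF h1C h2C] uM vM uv])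
      moreover have "(h1 u - h2 u) - (h1 v - h2 v) = (\<Sum>i<n. lam i * ((Gs i u - Gs i v) + (Fs i v - Fs i u)))"
        unfolding h1_def h2_def by (rule sum_comb)
      moreover have "(\<Sum>i<n. lam i * ((Gs i u - Gs i v) + (Fs i v - Fs i u))) \<ge> (\<Sum>i<n. lam i * (2 * \<gamma> * d u v))"
      proof (rule sum_mono)
        fix i assume "i \<in> {..<n}"
        then have "i < n" by simp
        then have "2 * \<gamma> * d u v \<le> (Gs i u - Gs i v) + (Fs i v - Fs i u)" using FGs[of i] by simp
        then show "lam i * (2 * \<gamma> * d u v) \<le> lam i * ((Gs i u - Gs i v) + (Fs i v - Fs i u))"
          using lam0 \<open>i < n\<close> by (simp add: mult_left_mono)
      qed
      moreover have "(\<Sum>i<n. lam i * (2 * \<gamma> * d u v)) = 2 * \<gamma> * d u v"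
        using lam1 by (simp add: sum_distrib_right[symmetric])
      ultimately have "2 * \<gamma> * d u v / d u v \<le> lipnorm M d (\<lambda>x. h1 x - h2 x)"
        using duv g0 by (smt (verit) divide_right_mono)
      then have "2 * \<gamma> \<le> lipnorm M d (\<lambda>x. h1 x - h2 x)" using duv by simp
      moreover have "2 - \<epsilon> < 2 * \<gamma>" unfolding \<gamma>_def using me' m0' by simp
      ultimately have "2 - \<epsilon> < lipnorm M d (\<lambda>x. h1 x - h2 x)" by linarith
      then show ?thesis using sD by (intro bexI)
    qed
    have "Sup Dset = 2"
    proof (rule cSup_eq_non_empty)
      show "Dset \<noteq> {}" using key[of 1] by auto
      show "\<And>x. x \<in> Dset \<Longrightarrow> x \<le> 2" by (rule ub)
      fix y assume y: "\<And>x. x \<in> Dset \<Longrightarrow> x \<le> y"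
      show "2 \<le> y"
      proof (rule ccontr)
        assume "\<not> 2 \<le> y"
        then obtain s where "s \<in> Dset" "s > 2 - (2 - y)" using key[of "2 - y"] by auto
        then show False using y by fastforce
      qed
    qed
    then show ?thesis unfolding lip_diam_def Dset_def CC_def S_def .
  qed
  show ?thesis unfolding SD2P_lip0_def using main by blast
qed


theorem proposition3p6:
  fixes M :: "'a set" and d :: "'a \<Rightarrow> 'a \<Rightarrow> real" and z :: 'a
  assumes "Metric_space M d" and "z \<in> M"
  shows "SD2P_lip0 M d z \<longleftrightarrow>
    (\<forall>(n::nat) (\<mu> :: nat \<Rightarrow> ('a \<times> 'a) set \<Rightarrow> real) (\<gamma>::real).
       n \<ge> 1 \<and> (\<forall>i<n. optimal M d z (\<mu> i) \<and> ba_norm (Mtilde M) (\<mu> i) = 1) \<and>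
       0 < \<gamma> \<and> \<gamma> < 1 \<longrightarrow>
       (\<exists>(A :: nat \<Rightarrow> ('a \<times> 'a) set) (f :: nat \<Rightarrow> 'a \<Rightarrow> real) (g :: nat \<Rightarrow> 'a \<Rightarrow> real) u v.
          (\<forall>i<n. A i \<subseteq> Mtilde M \<and> \<mu> i (A i) \<ge> \<gamma> \<and>
                 f i \<in> lip0_ball M d z \<and> g i \<in> lip0_ball M d z) \<and>
          u \<in> M \<and> v \<in> M \<and> u \<noteq> v \<and>
          (\<forall>i<n. \<forall>p\<in>A i. molecule_val d (f i) p \<ge> \<gamma> \<and> molecule_val d (g i) p \<ge> \<gamma>) \<and>
          (\<forall>i<n. \<forall>x\<in>pi_set (A i). \<forall>y\<in>pi_set (A i).
              max (f i x - f i y) (g i y - g i x) + \<gamma> * d u v \<le> d x u + d y v)))"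
proof
  assume SD: "SD2P_lip0 M d z"
  show "\<forall>(n::nat) (\<mu> :: nat \<Rightarrow> ('a \<times> 'a) set \<Rightarrow> real) (\<gamma>::real).
       n \<ge> 1 \<and> (\<forall>i<n. optimal M d z (\<mu> i) \<and> ba_norm (Mtilde M) (\<mu> i) = 1) \<and>
       0 < \<gamma> \<and> \<gamma> < 1 \<longrightarrow>
       (\<exists>(A :: nat \<Rightarrow> ('a \<times> 'a) set) (f :: nat \<Rightarrow> 'a \<Rightarrow> real) (g :: nat \<Rightarrow> 'a \<Rightarrow> real) u v.
          (\<forall>i<n. A i \<subseteq> Mtilde M \<and> \<mu> i (A i) \<ge> \<gamma> \<and>
                 f i \<in> lip0_ball M d z \<and> g i \<in> lip0_ball M d z) \<and>
          u \<in> M \<and> v \<in> M \<and> u \<noteq> v \<and>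
          (\<forall>i<n. \<forall>p\<in>A i. molecule_val d (f i) p \<ge> \<gamma> \<and> molecule_val d (g i) p \<ge> \<gamma>) \<and>
          (\<forall>i<n. \<forall>x\<in>pi_set (A i). \<forall>y\<in>pi_set (A i).
              max (f i x - f i y) (g i y - g i x) + \<gamma> * d u v \<le> d x u + d y v))"
  proof (intro allI impI)
    fix n :: nat and \<mu> :: "nat \<Rightarrow> ('a \<times> 'a) set \<Rightarrow> real" and \<gamma> :: real
    assume H: "n \<ge> 1 \<and> (\<forall>i<n. optimal M d z (\<mu> i) \<and> ba_norm (Mtilde M) (\<mu> i) = 1) \<and> 0 < \<gamma> \<and> \<gamma> < 1"
    then have h1: "n \<ge> 1" and h2: "\<forall>i<n. optimal M d z (\<mu> i) \<and> ba_norm (Mtilde M) (\<mu> i) = 1"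
      and h3: "0 < \<gamma>" and h4: "\<gamma> < 1" by auto
    show "\<exists>(A :: nat \<Rightarrow> ('a \<times> 'a) set) (f :: nat \<Rightarrow> 'a \<Rightarrow> real) (g :: nat \<Rightarrow> 'a \<Rightarrow> real) u v.
          (\<forall>i<n. A i \<subseteq> Mtilde M \<and> \<mu> i (A i) \<ge> \<gamma> \<and>
                 f i \<in> lip0_ball M d z \<and> g i \<in> lip0_ball M d z) \<and>
          u \<in> M \<and> v \<in> M \<and> u \<noteq> v \<and>
          (\<forall>i<n. \<forall>p\<in>A i. molecule_val d (f i) p \<ge> \<gamma> \<and> molecule_val d (g i) p \<ge> \<gamma>) \<and>
          (\<forall>i<n. \<forall>x\<in>pi_set (A i). \<forall>y\<in>pi_set (A i).
              max (f i x - f i y) (g i y - g i x) + \<gamma> * d u v \<le> d x u + d y v)"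
      by (rule forward[OF assms(1) assms(2) SD h1 h2 h3 h4])
  qed
next
  assume R: "\<forall>(n::nat) (\<mu> :: nat \<Rightarrow> ('a \<times> 'a) set \<Rightarrow> real) (\<gamma>::real).
       n \<ge> 1 \<and> (\<forall>i<n. optimal M d z (\<mu> i) \<and> ba_norm (Mtilde M) (\<mu> i) = 1) \<and>
       0 < \<gamma> \<and> \<gamma> < 1 \<longrightarrow>
       (\<exists>(A :: nat \<Rightarrow> ('a \<times> 'a) set) (f :: nat \<Rightarrow> 'a \<Rightarrow> real) (g :: nat \<Rightarrow> 'a \<Rightarrow> real) u v.
          (\<forall>i<n. A i \<subseteq> Mtilde M \<and> \<mu> i (A i) \<ge> \<gamma> \<and>
                 f i \<in> lip0_ball M d z \<and> g i \<in> lip0_ball M d z) \<and>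
          u \<in> M \<and> v \<in> M \<and> u \<noteq> v \<and>
          (\<forall>i<n. \<forall>p\<in>A i. molecule_val d (f i) p \<ge> \<gamma> \<and> molecule_val d (g i) p \<ge> \<gamma>) \<and>
          (\<forall>i<n. \<forall>x\<in>pi_set (A i). \<forall>y\<in>pi_set (A i).
              max (f i x - f i y) (g i y - g i x) + \<gamma> * d u v \<le> d x u + d y v))"
  show "SD2P_lip0 M d z" by (rule backward[OF assms(1) assms(2) R])
qed

end
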